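(* Let $B$ be a finite simplicial complex and $A\subset B$ a nonempty subset consisting of simplices of dimension $\le m$. Then $|A|$ has the homotopy type of a finite CW complex of dimension $\le m$.
   Context: Simplicial complexes are collections of simplices in a finite-dimensional Euclidean space. For a subset (collection of simplices) $A$ of $B$, $|A|$ denotes the union of the open simplices $\mathring{\sigma}$, $\sigma\in A$. *)

theory Defs
  imports "HOL-Analysis.Analysis"
begin

text \<open>Standard n-dimensional disc, open disc and boundary sphere, realised inside
  the space of real sequences (coordinates \<open>\<ge> n\<close> vanish), with the product topology
  (which agrees with the Euclidean topology on these finite-dimensional sets).\<close>

definition disc_set :: "nat \<Rightarrow> (nat \<Rightarrow> real) set" where
  "disc_set n = {x. (\<Sum>i<n. (x i)\<^sup>2) \<le> 1 \<and> (\<forall>i\<ge>n. x i = 0)}"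

definition open_disc_set :: "nat \<Rightarrow> (nat \<Rightarrow> real) set" where
  "open_disc_set n = {x. (\<Sum>i<n. (x i)\<^sup>2) < 1 \<and> (\<forall>i\<ge>n. x i = 0)}"

definition sphere_set :: "nat \<Rightarrow> (nat \<Rightarrow> real) set" where
  "sphere_set n = {x. (\<Sum>i<n. (x i)\<^sup>2) = 1 \<and> (\<forall>i\<ge>n. x i = 0)}"

text \<open>A finite CW complex of dimension \<open>\<le> m\<close> (Hatcher, Appendix; for finitely many
  cells the weak topology and closure finiteness are automatic): a Hausdorff space
  with finitely many cells, indexed by \<open>i < k\<close>, cell \<open>i\<close> of dimension \<open>d i \<le> m\<close>, with
  characteristic maps \<open>\<Phi> i\<close> from the closed disc, restricting to a homeomorphism of
  the open disc onto the open cell; the open cells partition the space and the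
  boundary sphere of each cell is mapped into the union of cells of lower dimension.\<close>

definition finite_CW_complex_dim :: "'b topology \<Rightarrow> nat \<Rightarrow> bool" where
  "finite_CW_complex_dim X m \<longleftrightarrow>
     Hausdorff_space X \<and>
     (\<exists>(k::nat) (d::nat \<Rightarrow> nat) (\<Phi>::nat \<Rightarrow> (nat \<Rightarrow> real) \<Rightarrow> 'b).
        (\<forall>i<k. d i \<le> m) \<and>
        (\<forall>i<k. continuous_map (subtopology (powertop_real UNIV) (disc_set (d i))) X (\<Phi> i)) \<and>
        (\<forall>i<k. homeomorphic_map (subtopology (powertop_real UNIV) (open_disc_set (d i)))
                                 (subtopology X (\<Phi> i ` open_disc_set (d i))) (\<Phi> i)) \<and>
        (\<forall>i<k. \<forall>j<k. i \<noteq> j \<longrightarrow> \<Phi> i ` open_disc_set (d i) \<inter> \<Phi> j ` open_disc_set (d j) = {}) \<and>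
        (\<Union>i<k. \<Phi> i ` open_disc_set (d i)) = topspace X \<and>
        (\<forall>i<k. \<Phi> i ` sphere_set (d i) \<subseteq> (\<Union>j\<in>{j. j < k \<and> d j < d i}. \<Phi> j ` open_disc_set (d j))))"

text \<open>Polyhedron of a set of simplices: union of the open simplices (relative interiors).\<close>

definition open_union :: "'a::euclidean_space set set \<Rightarrow> 'a set" where
  "open_union A = (\<Union>S\<in>A. rel_interior S)"

end

theory Submission
  imports Defs
begin

lemma continuous_on_Max_fun:
  assumes "finite I" "I \<noteq> {}" "\<And>i. i \<in> I \<Longrightarrow> continuous_on S (f i)"
  shows "continuous_on S (\<lambda>x. Max ((\<lambda>i. f i x :: real) ` I))"
  using assms
proof (induction I rule: finite_ne_induct)
  case (singleton a) then show ?case by simp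
next
  case (insert a F)
  have "continuous_on S (\<lambda>x. max (f a x) (Max ((\<lambda>i. f i x) ` F)))"
    using insert by (intro continuous_on_max) auto
  moreover have "\<And>x. Max ((\<lambda>i. f i x) ` insert a F) = max (f a x) (Max ((\<lambda>i. f i x) ` F))"
    using insert by (simp add: Max_insert)
  ultimately show ?case by simp
qed

lemma continuous_on_Min_fun:
  assumes "finite I" "I \<noteq> {}" "\<And>i. i \<in> I \<Longrightarrow> continuous_on S (f i)"
  shows "continuous_on S (\<lambda>x. Min ((\<lambda>i. f i x :: real) ` I))"
  using assms
proof (induction I rule: finite_ne_induct)
  case (singleton a) then show ?case by simp
next
  case (insert a F)
  have "continuous_on S (\<lambda>x. min (f a x) (Min ((\<lambda>i. f i x) ` F)))"
    using insert by (intro continuous_on_min) auto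
  moreover have "\<And>x. Min ((\<lambda>i. f i x) ` insert a F) = min (f a x) (Min ((\<lambda>i. f i x) ` F))"
    using insert by (simp add: Min_insert)
  ultimately show ?case by simp
qed

definition nrm :: "nat \<Rightarrow> (nat \<Rightarrow> real) \<Rightarrow> real" where
  "nrm d x = sqrt (\<Sum>i<d. (x i)\<^sup>2)"
definition vv :: "nat \<Rightarrow> (nat \<Rightarrow> real) \<Rightarrow> nat \<Rightarrow> real" where
  "vv d x i = (if i < d then x i else if i = d then - (\<Sum>j<d. x j) else 0)"
definition amax :: "nat \<Rightarrow> (nat \<Rightarrow> real) \<Rightarrow> real" where
  "amax d x = Max ((\<lambda>i. - vv d x i) ` {..d})"
definition mu :: "nat \<Rightarrow> (nat \<Rightarrow> real) \<Rightarrow> real" where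
  "mu d x = real (Suc d) * amax d x"
definition Psi :: "nat \<Rightarrow> (nat \<Rightarrow> real) \<Rightarrow> (nat \<Rightarrow> real)" where
  "Psi d x = (\<lambda>i. if i \<le> d then 1 / real (Suc d) + nrm d x * vv d x i / mu d x else 0)"
definition sdelta :: "nat \<Rightarrow> (nat \<Rightarrow> real) set" where
  "sdelta d = {z. (\<forall>i. 0 \<le> z i) \<and> (\<forall>i. d < i \<longrightarrow> z i = 0) \<and> (\<Sum>i\<le>d. z i) = 1}"
definition osdelta :: "nat \<Rightarrow> (nat \<Rightarrow> real) set" where
  "osdelta d = {z \<in> sdelta d. \<forall>i\<le>d. 0 < z i}"

lemma sum_vv: "(\<Sum>i\<le>d. vv d x i) = 0"
proof -
  have "(\<Sum>i\<le>d. vv d x i) = (\<Sum>i<d. vv d x i) + vv d x d"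
    by (simp add: lessThan_Suc_atMost[symmetric])
  also have "(\<Sum>i<d. vv d x i) = (\<Sum>i<d. x i)" by (simp add: vv_def)
  finally show ?thesis by (simp add: vv_def)
qed

lemma amax_ge: "i \<le> d \<Longrightarrow> - vv d x i \<le> amax d x"
  unfolding amax_def by (rule Max_ge) auto

lemma amax_in: "\<exists>i\<le>d. - vv d x i = amax d x"
proof -
  have "amax d x \<in> (\<lambda>i. - vv d x i) ` {..d}" unfolding amax_def by (rule Max_in) auto
  then show ?thesis by force
qed

lemma amax_nonneg: "0 \<le> amax d x"
proof -
  have "(\<Sum>i\<le>d. - vv d x i) \<le> (\<Sum>i\<le>d. amax d x)"
    by (rule sum_mono) (simp add: amax_ge)
  then have "0 \<le> real (Suc d) * amax d x" using sum_vv[of d x] by (simp add: sum_negf)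
  then show ?thesis by (simp add: zero_le_mult_iff)
qed

lemma vv_le: assumes "i \<le> d" shows "vv d x i \<le> real d * amax d x"
proof -
  have "vv d x i = - (\<Sum>j\<in>{..d}-{i}. vv d x j)"
    using sum_vv[of d x] sum.remove[of "{..d}" i "vv d x"] assms by simp
  also have "\<dots> = (\<Sum>j\<in>{..d}-{i}. - vv d x j)" by (simp add: sum_negf)
  also have "\<dots> \<le> (\<Sum>j\<in>{..d}-{i}. amax d x)" by (rule sum_mono) (simp add: amax_ge)
  also have "\<dots> = real d * amax d x" using assms by simp
  finally show ?thesis .
qed

lemma abs_vv_le_mu: assumes "i \<le> d" shows "\<bar>vv d x i\<bar> \<le> mu d x"
proof -
  have "0 \<le> real d * amax d x" by (simp add: amax_nonneg)
  moreover have "mu d x = amax d x + real d * amax d x" by (simp add: mu_def algebra_simps)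
  ultimately show ?thesis
  using vv_le[OF assms, of x] amax_ge[OF assms, of x] amax_nonneg[of d x]
  unfolding abs_le_iff by linarith
qed

lemma mu_nonneg: "0 \<le> mu d x" by (simp add: mu_def amax_nonneg)

lemma amax_zero_iff: "amax d x = 0 \<longleftrightarrow> (\<forall>i<d. x i = 0)"
proof
  assume a: "amax d x = 0"
  have ge: "\<forall>i\<in>{..d}. 0 \<le> vv d x i" using amax_ge[of _ d x] a by force
  have "\<forall>i\<in>{..d}. vv d x i = 0" using sum_nonneg_eq_0_iff[of "{..d}" "vv d x"] ge sum_vv[of d x] by auto
  then show "\<forall>i<d. x i = 0" by (metis atMost_iff less_imp_le_nat vv_def)
next
  assume "\<forall>i<d. x i = 0"
  then have "\<forall>i. vv d x i = 0" by (auto simp: vv_def)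
  then show "amax d x = 0" unfolding amax_def by simp
qed

lemma nrm_zero_iff: "nrm d x = 0 \<longleftrightarrow> (\<forall>i<d. x i = 0)"
  unfolding nrm_def using sum_nonneg_eq_0_iff[of "{..<d}" "\<lambda>i. (x i)\<^sup>2"] by auto

lemma mu_zero_iff: "mu d x = 0 \<longleftrightarrow> nrm d x = 0"
  by (simp add: mu_def amax_zero_iff nrm_zero_iff)

lemma nrm_nonneg: "0 \<le> nrm d x" by (simp add: nrm_def sum_nonneg)

lemma coords_cong:
  assumes "\<forall>i<d. x i = y i"
  shows "vv d x = vv d y" "amax d x = amax d y" "nrm d x = nrm d y" "mu d x = mu d y"
proof -
  show 1: "vv d x = vv d y" using assms by (auto simp: vv_def fun_eq_iff)
  show 2: "amax d x = amax d y" by (simp add: amax_def 1)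
  show "nrm d x = nrm d y" using assms by (simp add: nrm_def)
  show "mu d x = mu d y" by (simp add: mu_def 2)
qed

lemma scale_props:
  assumes "0 \<le> c"
  shows "vv d (\<lambda>i. c * x i) i = c * vv d x i"
    "amax d (\<lambda>i. c * x i) = c * amax d x"
    "nrm d (\<lambda>i. c * x i) = c * nrm d x"
    "mu d (\<lambda>i. c * x i) = c * mu d x"
proof -
  show v: "vv d (\<lambda>i. c * x i) i = c * vv d x i" for i by (simp add: vv_def sum_distrib_left)
  have "amax d (\<lambda>i. c * x i) = Max ((\<lambda>y. c * y) ` ((\<lambda>i. - vv d x i) ` {..d}))"
    unfolding amax_def by (simp add: v image_image)
  also have "\<dots> = c * amax d x" unfolding amax_def
    by (rule mono_Max_commute[symmetric]) (auto simp: mono_def assms mult_left_mono)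
  finally show a: "amax d (\<lambda>i. c * x i) = c * amax d x" .
  show "nrm d (\<lambda>i. c * x i) = c * nrm d x"
    using assms by (simp add: nrm_def power_mult_distrib sum_distrib_left[symmetric] real_sqrt_mult)
  show "mu d (\<lambda>i. c * x i) = c * mu d x" by (simp add: mu_def a)
qed


lemma nrm_le1: "x \<in> disc_set d \<Longrightarrow> nrm d x \<le> 1"
  by (simp add: disc_set_def nrm_def)
lemma nrm_lt1: "x \<in> open_disc_set d \<Longrightarrow> nrm d x < 1"
  by (simp add: open_disc_set_def nrm_def)
lemma nrm_eq1: "x \<in> sphere_set d \<Longrightarrow> nrm d x = 1"
  by (simp add: sphere_set_def nrm_def)

lemma psi_lower:
  assumes "i \<le> d" "0 < mu d x"
  shows "(1 - nrm d x) / real (Suc d) \<le> Psi d x i"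
    and "vv d x i = - amax d x \<Longrightarrow> Psi d x i = (1 - nrm d x) / real (Suc d)"
proof -
  have am: "0 < amax d x" using assms(2) by (simp add: mu_def zero_less_mult_iff)
  have "nrm d x * (- amax d x) \<le> nrm d x * vv d x i"
    using amax_ge[OF assms(1), of x] nrm_nonneg[of d x] by (intro mult_left_mono) auto
  then have "nrm d x * (- amax d x) / mu d x \<le> nrm d x * vv d x i / mu d x"
    using assms(2) by (intro divide_right_mono) auto
  moreover have eq: "nrm d x * (- amax d x) / mu d x = - nrm d x / real (Suc d)"
    unfolding mu_def using am by simp
  ultimately show "(1 - nrm d x) / real (Suc d) \<le> Psi d x i"
    using assms(1) by (simp add: Psi_def diff_divide_distrib)
  assume "vv d x i = - amax d x"
  then have "nrm d x * vv d x i / mu d x = - nrm d x / real (Suc d)"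
    using eq by simp
  then show "Psi d x i = (1 - nrm d x) / real (Suc d)"
    using assms(1) by (simp add: Psi_def diff_divide_distrib)
qed

lemma psi_sum: "(\<Sum>i\<le>d. Psi d x i) = 1"
proof -
  have "(\<Sum>i\<le>d. Psi d x i) = (\<Sum>i\<le>d. 1 / real (Suc d)) + (nrm d x / mu d x) * (\<Sum>i\<le>d. vv d x i)"
    by (simp add: Psi_def sum.distrib sum_distrib_left)
  then show ?thesis by (simp add: sum_vv)
qed

lemma psi_in_sdelta:
  assumes "x \<in> disc_set d" shows "Psi d x \<in> sdelta d"
proof -
  have "0 \<le> Psi d x i" for i
  proof (cases "i \<le> d")
    case True
    show ?thesis
    proof (cases "mu d x = 0")
      case True then show ?thesis by (simp add: Psi_def)
    next
      case False
      then have "0 < mu d x" using mu_nonneg[of d x] by simp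
      from psi_lower(1)[OF \<open>i \<le> d\<close> this] nrm_le1[OF assms] show ?thesis
        by (smt (verit) divide_nonneg_nonneg of_nat_0_le_iff)
    qed
  qed (simp add: Psi_def)
  moreover have "(\<Sum>i\<le>d. Psi d x i) = 1" by (rule psi_sum)
  ultimately show ?thesis unfolding sdelta_def by (auto simp: Psi_def)
qed

lemma psi_in_osdelta:
  assumes "x \<in> open_disc_set d" shows "Psi d x \<in> osdelta d"
proof -
  have disc: "x \<in> disc_set d" using assms by (simp add: open_disc_set_def disc_set_def)
  have "0 < Psi d x i" if "i \<le> d" for i
  proof (cases "mu d x = 0")
    case True then show ?thesis using that by (simp add: Psi_def)
  next
    case False
    then have "0 < mu d x" using mu_nonneg[of d x] by simp
    from psi_lower(1)[OF \<open>i \<le> d\<close> this] nrm_lt1[OF assms] show ?thesis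
      by (smt (verit) divide_pos_pos of_nat_0_less_iff zero_less_Suc)
  qed
  then show ?thesis using psi_in_sdelta[OF disc] by (simp add: osdelta_def)
qed

lemma psi_sphere:
  assumes "x \<in> sphere_set d" shows "\<exists>i\<le>d. Psi d x i = 0"
proof -
  have "nrm d x = 1" using nrm_eq1[OF assms] .
  then have "0 < mu d x" using mu_zero_iff[of d x] mu_nonneg[of d x] by auto
  obtain i where "i \<le> d" "- vv d x i = amax d x" using amax_in by blast
  then show ?thesis using psi_lower(2)[OF \<open>i \<le> d\<close> \<open>0 < mu d x\<close>] \<open>nrm d x = 1\<close> by auto
qed


lemma psi_onto:
  assumes z: "z \<in> osdelta d" shows "\<exists>x\<in>open_disc_set d. Psi d x = z"
proof -
  define D where "D = real (Suc d)"
  have D: "0 < D" by (simp add: D_def)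
  have zpos: "\<And>i. i \<le> d \<Longrightarrow> 0 < z i" and zz: "\<And>i. d < i \<Longrightarrow> z i = 0"
    and zs: "(\<Sum>i\<le>d. z i) = 1" using z by (auto simp: osdelta_def sdelta_def)
  have zs': "(\<Sum>i<d. z i) = 1 - z d" using zs by (simp add: lessThan_Suc_atMost[symmetric])
  define x' where "x' = (\<lambda>i. if i < d then z i - 1 / D else 0)"
  have vx': "vv d x' i = z i - 1 / D" if "i \<le> d" for i
  proof (cases "i < d")
    case True then show ?thesis by (simp add: vv_def x'_def)
  next
    case False
    then have i: "i = d" using that by simp
    have "vv d x' d = - (\<Sum>j<d. z j - 1 / D)" by (simp add: vv_def x'_def)
    also have "\<dots> = z d - 1 + real d / D" using zs' by (simp add: sum_subtractf)
    also have "\<dots> = z d - 1 / D" using D by (simp add: D_def field_simps)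
    finally show ?thesis using i by simp
  qed
  obtain i0 where i0: "i0 \<le> d" "- vv d x' i0 = amax d x'" using amax_in by blast
  have am: "amax d x' < 1 / D" using i0 vx'[OF i0(1)] zpos[OF i0(1)] by simp
  have mu1: "mu d x' < 1" using am D by (simp add: mu_def D_def field_simps)
  show ?thesis
  proof (cases "nrm d x' = 0")
    case True
    then have x0: "\<forall>i<d. z i = 1 / D" using nrm_zero_iff[of d x'] by (auto simp: x'_def)
    have "(\<Sum>i<d. z i) = real d / D" using x0 by simp
    then have zd: "z d = 1 / D" using zs' D by (simp add: D_def field_simps)
    have "(\<lambda>_. 0) \<in> open_disc_set d" by (simp add: open_disc_set_def)
    moreover have "Psi d (\<lambda>_. 0) = z"
    proof
      fix i
      have "nrm d (\<lambda>_. 0) = 0" by (simp add: nrm_def)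
      then show "Psi d (\<lambda>_. 0) i = z i"
        using x0 zd zz by (cases "i < d"; cases "i = d") (auto simp: Psi_def D_def)
    qed
    ultimately show ?thesis by blast
  next
    case False
    then have nrmpos: "0 < nrm d x'" using nrm_nonneg[of d x'] by simp
    then have mupos: "0 < mu d x'" using mu_zero_iff[of d x'] mu_nonneg[of d x'] by auto
    define c where "c = mu d x' / nrm d x'"
    have c: "0 < c" using nrmpos mupos by (simp add: c_def)
    define x where "x = (\<lambda>i. c * x' i)"
    have nx: "nrm d x = mu d x'" using scale_props(3)[of c d x'] c nrmpos by (simp add: x_def c_def)
    have "x \<in> open_disc_set d"
    proof -
      have "sqrt (\<Sum>i<d. (x i)\<^sup>2) < 1" using nx mu1 by (simp add: nrm_def)
      then have "(\<Sum>i<d. (x i)\<^sup>2) < 1" by (simp add: real_sqrt_less_iff)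
      then show ?thesis by (simp add: open_disc_set_def x_def x'_def)
    qed
    moreover have "Psi d x = z"
    proof
      fix i
      show "Psi d x i = z i"
      proof (cases "i \<le> d")
        case True
        have "nrm d x * vv d x i / mu d x = (c * nrm d x') * (c * vv d x' i) / (c * mu d x')"
          using c unfolding x_def by (simp add: scale_props)
        also have "\<dots> = vv d x' i" using c nrmpos mupos by (simp add: c_def field_simps)
        finally show ?thesis using True vx'[OF True] by (simp add: Psi_def D_def)
      next
        case False then show ?thesis using zz by (simp add: Psi_def)
      qed
    qed
    ultimately show ?thesis by blast
  qed
qed

lemma psi_inj: "inj_on (Psi d) (disc_set d)"
proof (rule inj_onI)
  fix x y assume x: "x \<in> disc_set d" and y: "y \<in> disc_set d" and eq: "Psi d x = Psi d y"
  have xz: "\<And>i. d \<le> i \<Longrightarrow> x i = 0" and yz: "\<And>i. d \<le> i \<Longrightarrow> y i = 0"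
    using x y by (auto simp: disc_set_def)
  have c: "nrm d x / mu d x * x i = nrm d y / mu d y * y i" if "i < d" for i
  proof -
    have "Psi d x i = Psi d y i" using eq by simp
    then show ?thesis using that by (simp add: Psi_def vv_def)
  qed
  have zero_case: "nrm d u = 0 \<Longrightarrow> (\<And>i. i < d \<Longrightarrow> nrm d u / mu d u * u i = nrm d w / mu d w * w i)
      \<Longrightarrow> \<forall>i<d. w i = 0" for u w
  proof -
    assume n0: "nrm d u = 0" and h: "\<And>i. i < d \<Longrightarrow> nrm d u / mu d u * u i = nrm d w / mu d w * w i"
    show "\<forall>i<d. w i = 0"
    proof (cases "nrm d w = 0")
      case True then show ?thesis using nrm_zero_iff by blast
    next
      case False
      then have "0 < mu d w" "0 < nrm d w" using mu_zero_iff[of d w] mu_nonneg[of d w] nrm_nonneg[of d w] by auto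
      then have "\<forall>i<d. w i = 0" using h n0 by simp
      then show ?thesis .
    qed
  qed
  have lowd: "\<forall>i<d. x i = y i"
  proof (cases "nrm d x = 0 \<or> nrm d y = 0")
    case True
    then have "(\<forall>i<d. x i = 0) \<and> (\<forall>i<d. y i = 0)"
      using zero_case[of x y] zero_case[of y x] c nrm_zero_iff by metis
    then show ?thesis by simp
  next
    case False
    then have nx: "0 < nrm d x" and ny: "0 < nrm d y" using nrm_nonneg[of d x] nrm_nonneg[of d y] by auto
    then have mx: "0 < mu d x" and my: "0 < mu d y"
      using mu_zero_iff mu_nonneg by (metis less_eq_real_def)+
    define sx where "sx = nrm d x / mu d x"
    define sy where "sy = nrm d y / mu d y"
    have sx: "0 < sx" and sy: "0 < sy" using nx ny mx my by (auto simp: sx_def sy_def)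
    have cc: "\<forall>i<d. (\<lambda>i. sx * x i) i = (\<lambda>i. sy * y i) i" using c by (simp add: sx_def sy_def)
    have "amax d (\<lambda>i. sx * x i) = amax d (\<lambda>i. sy * y i)" using coords_cong(2)[OF cc] .
    then have "sx * amax d x = sy * amax d y" using sx sy by (simp add: scale_props)
    moreover have "sx * amax d x = nrm d x / real (Suc d)" "sy * amax d y = nrm d y / real (Suc d)"
      using mx my by (auto simp: sx_def sy_def mu_def field_simps)
    ultimately have nn: "nrm d x = nrm d y" by simp
    have "nrm d (\<lambda>i. sx * x i) = nrm d (\<lambda>i. sy * y i)" using coords_cong(3)[OF cc] .
    then have "sx * nrm d x = sy * nrm d y" using sx sy by (simp add: scale_props)
    then have "sx = sy" using nn nx by simp
    then show ?thesis using cc sx by simp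
  qed
  show "x = y"
  proof
    fix i show "x i = y i" using lowd xz yz by (cases "i < d") auto
  qed
qed


lemma cont_coord [continuous_intros]: "continuous_on S (\<lambda>x::nat \<Rightarrow> real. x i)"
  by (rule continuous_on_subset[OF continuous_on_product_coordinates]) simp

lemma cont_nrm: "continuous_on UNIV (nrm d)"
  unfolding nrm_def by (intro continuous_intros)

lemma cont_vv: "continuous_on UNIV (\<lambda>x. vv d x i)"
  unfolding vv_def by (cases "i < d"; cases "i = d") (auto intro!: continuous_intros)

lemma cont_amax: "continuous_on UNIV (amax d)"
  unfolding amax_def by (rule continuous_on_Max_fun) (auto intro!: continuous_intros cont_vv)

lemma cont_mu: "continuous_on UNIV (mu d)"
  unfolding mu_def by (intro continuous_intros cont_amax)

lemma tendsto_of_cont_UNIV: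
  "continuous_on UNIV f \<Longrightarrow> (f \<longlongrightarrow> f x) (at x within S)"
  by (metis continuous_on_def UNIV_I tendsto_within_subset subset_UNIV)

lemma cont_psi_coord: "continuous_on (disc_set d) (\<lambda>x. Psi d x i)"
proof (cases "i \<le> d")
  case False then show ?thesis by (simp add: Psi_def)
next
  case True
  define D where "D = real (Suc d)"
  have eq: "(\<lambda>x. Psi d x i) = (\<lambda>x. 1 / D + nrm d x * vv d x i / mu d x)"
    using True by (simp add: Psi_def fun_eq_iff D_def)
  show ?thesis unfolding eq continuous_on_def
  proof
    fix x0 assume x0: "x0 \<in> disc_set d"
    have tn: "(nrm d \<longlongrightarrow> nrm d x0) (at x0 within disc_set d)" by (rule tendsto_of_cont_UNIV[OF cont_nrm])
    have tv: "((\<lambda>x. vv d x i) \<longlongrightarrow> vv d x0 i) (at x0 within disc_set d)" by (rule tendsto_of_cont_UNIV[OF cont_vv])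
    have tm: "(mu d \<longlongrightarrow> mu d x0) (at x0 within disc_set d)" by (rule tendsto_of_cont_UNIV[OF cont_mu])
    show "((\<lambda>x. 1 / D + nrm d x * vv d x i / mu d x) \<longlongrightarrow> 1 / D + nrm d x0 * vv d x0 i / mu d x0)
          (at x0 within disc_set d)"
    proof (cases "mu d x0 = 0")
      case False
      then show ?thesis by (intro tendsto_intros tn tv tm)
    next
      case True
      then have n0: "nrm d x0 = 0" using mu_zero_iff by blast
      have "((\<lambda>x. nrm d x * vv d x i / mu d x) \<longlongrightarrow> 0) (at x0 within disc_set d)"
      proof (rule Lim_null_comparison)
        show "\<forall>\<^sub>F x in at x0 within disc_set d. norm (nrm d x * vv d x i / mu d x) \<le> nrm d x"
        proof (rule always_eventually, rule allI)
          fix x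
          show "norm (nrm d x * vv d x i / mu d x) \<le> nrm d x"
          proof (cases "mu d x = 0")
            case True then show ?thesis by (simp add: nrm_nonneg)
          next
            case False
            then have mp: "0 < mu d x" using mu_nonneg[of d x] by simp
            have "\<bar>vv d x i\<bar> / mu d x \<le> 1" using abs_vv_le_mu[OF \<open>i \<le> d\<close>, of x] mp by simp
            then have "nrm d x * (\<bar>vv d x i\<bar> / mu d x) \<le> nrm d x * 1"
              by (intro mult_left_mono nrm_nonneg)
            then show ?thesis using mp nrm_nonneg[of d x] by (simp add: abs_mult)
          qed
        qed
        show "(nrm d \<longlongrightarrow> 0) (at x0 within disc_set d)" using tn n0 by simp
      qed
      then have "((\<lambda>x. 1 / D + nrm d x * vv d x i / mu d x) \<longlongrightarrow> 1 / D + 0) (at x0 within disc_set d)"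
        by (intro tendsto_intros)
      then show ?thesis using True by simp
    qed
  qed
qed

lemma cont_psi: "continuous_on (disc_set d) (Psi d)"
  by (rule continuous_on_coordinatewise_then_product) (rule cont_psi_coord)

lemma closed_disc: "closed (disc_set d)"
proof -
  have "disc_set d = {x. (\<Sum>i<d. (x i)\<^sup>2) \<le> 1} \<inter> (\<Inter>i\<in>{i. d \<le> i}. {x. x i = 0})"
    by (auto simp: disc_set_def)
  moreover have "closed {x::nat\<Rightarrow>real. (\<Sum>i<d. (x i)\<^sup>2) \<le> 1}"
    by (rule closed_Collect_le) (auto intro!: continuous_intros)
  moreover have "closed {x::nat\<Rightarrow>real. x i = 0}" for i
    by (rule closed_Collect_eq) (auto intro!: continuous_intros)
  ultimately show ?thesis by (metis closed_INT closed_Int)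
qed

lemma compact_disc: "compact (disc_set d)"
proof -
  define P where "P = PiE UNIV (\<lambda>i. if i < d then {-1..1::real} else {0})"
  have "compactin (product_topology (\<lambda>i. euclideanreal) UNIV) P"
    unfolding P_def by (subst compactin_PiE) (auto simp: compactin_euclidean_iff)
  then have cP: "compact P" by (simp add: euclidean_product_topology compactin_euclidean_iff)
  have "disc_set d \<subseteq> P"
  proof
    fix x assume x: "x \<in> disc_set d"
    have "\<bar>x i\<bar> \<le> 1" if "i < d" for i
    proof -
      have "(x i)\<^sup>2 \<le> (\<Sum>j<d. (x j)\<^sup>2)" using that by (intro member_le_sum) auto
      then have "(x i)\<^sup>2 \<le> 1" using x by (simp add: disc_set_def)
      then show ?thesis by (simp add: abs_square_le_1)
    qed
    then show "x \<in> P" using x by (auto simp: P_def disc_set_def abs_le_iff)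
  qed
  then have "disc_set d = P \<inter> disc_set d" by blast
  then show ?thesis using compact_Int_closed[OF cP closed_disc] by metis
qed

definition Kset :: "nat \<Rightarrow> (nat set \<Rightarrow> bool) \<Rightarrow> (nat \<Rightarrow> real) set" where
  "Kset N ok = {y. (\<forall>i. 0 \<le> y i) \<and> (\<forall>i. N \<le> i \<longrightarrow> y i = 0) \<and> (\<Sum>i<N. y i) = 1 \<and> ok {i. y i \<noteq> 0}}"

definition en :: "nat set \<Rightarrow> nat \<Rightarrow> nat" where
  "en I = (SOME h. bij_betw h {..<card I} I)"

definition relabel :: "nat set \<Rightarrow> (nat \<Rightarrow> real) \<Rightarrow> (nat \<Rightarrow> real)" where
  "relabel I z = (\<lambda>j. if j \<in> I then z (inv_into {..<card I} (en I) j) else 0)"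

lemma en_bij: "finite I \<Longrightarrow> bij_betw (en I) {..<card I} I"
  unfolding en_def using ex_bij_betw_nat_finite[of I] someI_ex
  by (metis atLeast0LessThan)

lemma relabel_en: "finite I \<Longrightarrow> t < card I \<Longrightarrow> relabel I z (en I t) = z t"
  using en_bij[of I] by (auto simp: relabel_def bij_betw_inv_into_left bij_betwE)

lemma relabel_cont: "continuous_on S (relabel I)"
  unfolding relabel_def
proof (rule continuous_on_coordinatewise_then_product)
  fix i show "continuous_on S (\<lambda>x. if i \<in> I then x (inv_into {..<card I} (en I) i) else 0)"
    by (cases "i \<in> I") (simp_all add: cont_coord)
qed

lemma supp_subset_ok: "ok I \<Longrightarrow> J \<subseteq> I \<Longrightarrow> (\<forall>I J. ok I \<longrightarrow> J \<subseteq> I \<longrightarrow> ok J) \<Longrightarrow> ok J"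
  by blast

context
  fixes N :: nat and ok :: "nat set \<Rightarrow> bool" and m :: nat
  assumes okN: "\<And>I. ok I \<Longrightarrow> I \<subseteq> {..<N}"
    and okdown: "\<And>I J. ok I \<Longrightarrow> J \<subseteq> I \<Longrightarrow> ok J"
    and okcard: "\<And>I. ok I \<Longrightarrow> card I \<le> Suc m"
begin

lemma ok_finite: "ok I \<Longrightarrow> finite I"
  using okN finite_subset by blast

lemma relabel_sum:
  assumes "ok I" "I \<noteq> {}"
  shows "(\<Sum>j<N. relabel I z j) = (\<Sum>t\<le>card I - 1. z t)"
proof -
  have fI: "finite I" using ok_finite[OF assms(1)] .
  have cI: "0 < card I" using fI assms(2) by (simp add: card_gt_0_iff)
  have "(\<Sum>j<N. relabel I z j) = (\<Sum>j\<in>I. relabel I z j)"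
    using okN[OF assms(1)] by (intro sum.mono_neutral_right) (auto simp: relabel_def)
  also have "\<dots> = (\<Sum>t\<in>{..<card I}. relabel I z (en I t))"
    using en_bij[OF fI] by (simp add: sum.reindex_bij_betw)
  also have "\<dots> = (\<Sum>t\<in>{..<card I}. z t)" using fI by (simp add: relabel_en)
  also have "{..<card I} = {..card I - 1}" using cI by auto
  finally show ?thesis .
qed

lemma supp_relabel: "{j. relabel I z j \<noteq> 0} = en I ` {t. t < card I \<and> z t \<noteq> 0}" if "finite I"
proof -
  have b: "bij_betw (en I) {..<card I} I" using en_bij[OF that] .
  show ?thesis
  proof (intro set_eqI iffI)
    fix j assume "j \<in> {j. relabel I z j \<noteq> 0}"
    then have j: "j \<in> I" "z (inv_into {..<card I} (en I) j) \<noteq> 0" by (auto simp: relabel_def split: if_splits)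
    then have "inv_into {..<card I} (en I) j < card I" "en I (inv_into {..<card I} (en I) j) = j"
      using b bij_betw_inv_into[OF b] bij_betw_inv_into_right[OF b] by (auto dest: bij_betwE)
    then show "j \<in> en I ` {t. t < card I \<and> z t \<noteq> 0}" using j by (metis (mono_tags, lifting) image_eqI mem_Collect_eq)
  next
    fix j assume "j \<in> en I ` {t. t < card I \<and> z t \<noteq> 0}"
    then obtain t where "t < card I" "z t \<noteq> 0" "j = en I t" by auto
    then show "j \<in> {j. relabel I z j \<noteq> 0}" using relabel_en[OF that] by simp
  qed
qed

lemma relabel_in_K:
  assumes "ok I" "I \<noteq> {}" "z \<in> sdelta (card I - 1)"
  shows "relabel I z \<in> Kset N ok"
proof -
  have fI: "finite I" using ok_finite[OF assms(1)] .
  have "{j. relabel I z j \<noteq> 0} \<subseteq> I" using supp_relabel[OF fI] en_bij[OF fI] by (auto dest: bij_betwE)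
  then have "ok {j. relabel I z j \<noteq> 0}" using okdown[OF assms(1)] by blast
  moreover have "(\<Sum>j<N. relabel I z j) = 1" using relabel_sum[OF assms(1,2)] assms(3) by (simp add: sdelta_def)
  moreover have "\<forall>j. 0 \<le> relabel I z j" using assms(3) by (simp add: relabel_def sdelta_def)
  moreover have "\<forall>j. N \<le> j \<longrightarrow> relabel I z j = 0" using okN[OF assms(1)] by (auto simp: relabel_def)
  ultimately show ?thesis by (simp add: Kset_def)
qed

lemma relabel_supp_open:
  assumes "ok I" "I \<noteq> {}" "z \<in> osdelta (card I - 1)"
  shows "{j. relabel I z j \<noteq> 0} = I"
proof -
  have fI: "finite I" using ok_finite[OF assms(1)] .
  have cI: "0 < card I" using fI assms(2) by (simp add: card_gt_0_iff)
  have "0 < z t" if "t < card I" for t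
  proof -
    have "t \<le> card I - 1" using that by linarith
    then show ?thesis using assms(3) by (simp add: osdelta_def)
  qed
  then have "{t. t < card I \<and> z t \<noteq> 0} = {..<card I}" by force
  then show ?thesis using supp_relabel[OF fI, of z] en_bij[OF fI] by (simp add: bij_betw_def)
qed

lemma relabel_supp_bdry:
  assumes "ok I" "I \<noteq> {}" "z \<in> sdelta (card I - 1)" "z \<notin> osdelta (card I - 1)"
  shows "{j. relabel I z j \<noteq> 0} \<subset> I"
proof -
  have fI: "finite I" using ok_finite[OF assms(1)] .
  have cI: "0 < card I" using fI assms(2) by (simp add: card_gt_0_iff)
  obtain t where t0: "t \<le> card I - 1" "\<not> 0 < z t" using assms(3,4) unfolding osdelta_def by auto
  have "0 \<le> z t" using assms(3) by (simp add: sdelta_def)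
  then have t: "t \<le> card I - 1" "z t = 0" using t0 by auto
  have tl: "t < card I" using t cI by linarith
  have "en I t \<in> I" using en_bij[OF fI] tl by (auto dest: bij_betwE)
  moreover have "relabel I z (en I t) = 0" using relabel_en[OF fI tl] t by simp
  moreover have "{j. relabel I z j \<noteq> 0} \<subseteq> I" using supp_relabel[OF fI] en_bij[OF fI] by (auto dest: bij_betwE)
  ultimately show ?thesis by blast
qed

lemma relabel_onto:
  assumes "y \<in> Kset N ok" "{j. y j \<noteq> 0} = I" "I \<noteq> {}"
  shows "\<exists>z\<in>osdelta (card I - 1). relabel I z = y"
proof -
  have okI: "ok I" using assms by (simp add: Kset_def)
  have fI: "finite I" using ok_finite[OF okI] .
  have cI: "0 < card I" using fI assms(3) by (simp add: card_gt_0_iff)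
  have b: "bij_betw (en I) {..<card I} I" using en_bij[OF fI] .
  define z where "z = (\<lambda>t. if t < card I then y (en I t) else 0)"
  have rz: "relabel I z = y"
  proof
    fix j show "relabel I z j = y j"
    proof (cases "j \<in> I")
      case True
      then have "inv_into {..<card I} (en I) j < card I" "en I (inv_into {..<card I} (en I) j) = j"
        using bij_betw_inv_into[OF b] bij_betw_inv_into_right[OF b] by (auto dest: bij_betwE)
      then show ?thesis using True by (simp add: relabel_def z_def)
    next
      case False then show ?thesis using assms(2) by (auto simp: relabel_def)
    qed
  qed
  have pos: "0 < z t" if "t \<le> card I - 1" for t
  proof -
    have tl: "t < card I" using that cI by linarith
    then have "en I t \<in> I" using b by (auto dest: bij_betwE)
    then have "y (en I t) \<noteq> 0" using assms(2) by auto
    moreover have "0 \<le> y (en I t)" using assms(1) by (simp add: Kset_def)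
    ultimately show ?thesis using tl by (simp add: z_def)
  qed
  have "(\<Sum>t\<le>card I - 1. z t) = 1"
    using relabel_sum[OF okI assms(3), of z] rz assms(1) by (simp add: Kset_def)
  moreover have "\<forall>t. 0 \<le> z t" using assms(1) by (simp add: z_def Kset_def)
  moreover have "\<forall>t. card I - 1 < t \<longrightarrow> z t = 0" using cI by (auto simp: z_def)
  ultimately have "z \<in> osdelta (card I - 1)" using pos by (simp add: osdelta_def sdelta_def)
  then show ?thesis using rz by blast
qed

lemma relabel_inj:
  assumes "finite I" "I \<noteq> {}" shows "inj_on (relabel I) (sdelta (card I - 1))"
proof (rule inj_onI)
  fix z w assume z: "z \<in> sdelta (card I - 1)" and w: "w \<in> sdelta (card I - 1)" and e: "relabel I z = relabel I w"
  have cI: "0 < card I" using assms by (simp add: card_gt_0_iff)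
  show "z = w"
  proof
    fix t show "z t = w t"
    proof (cases "t < card I")
      case True then show ?thesis using relabel_en[OF assms(1) True, of z] relabel_en[OF assms(1) True, of w] e by simp
    next
      case False then show ?thesis using z w cI by (auto simp: sdelta_def)
    qed
  qed
qed


lemma K_supp: 
  assumes "y \<in> Kset N ok" shows "ok {j. y j \<noteq> 0}" "{j. y j \<noteq> 0} \<noteq> {}"
proof -
  show "ok {j. y j \<noteq> 0}" using assms by (simp add: Kset_def)
  show "{j. y j \<noteq> 0} \<noteq> {}"
  proof
    assume "{j. y j \<noteq> 0} = {}"
    then have "(\<Sum>i<N. y i) = 0" by auto
    then show False using assms by (simp add: Kset_def)
  qed
qed

theorem K_CW: "finite_CW_complex_dim (subtopology (powertop_real UNIV) (Kset N ok)) m"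
proof -
  define K where "K = Kset N ok"
  define CH where "CH = {I. ok I \<and> I \<noteq> {}}"
  have fCH: "finite CH"
  proof (rule finite_subset)
    show "CH \<subseteq> Pow {..<N}" using okN by (auto simp: CH_def)
  qed auto
  obtain cf where cf: "bij_betw cf {0..<card CH} CH" using ex_bij_betw_nat_finite[OF fCH] by blast
  define k where "k = card CH"
  define d where "d = (\<lambda>i. card (cf i) - 1)"
  define \<Phi> where "\<Phi> = (\<lambda>i x. relabel (cf i) (Psi (d i) x))"
  have cfCH: "i < k \<Longrightarrow> ok (cf i) \<and> cf i \<noteq> {}" for i
    using cf by (auto simp: k_def CH_def dest: bij_betwE)
  have cfinj: "i < k \<Longrightarrow> j < k \<Longrightarrow> cf i = cf j \<Longrightarrow> i = j" for i j
    using cf by (auto simp: k_def bij_betw_def inj_on_def)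
  have cfonto: "ok I \<Longrightarrow> I \<noteq> {} \<Longrightarrow> \<exists>i<k. cf i = I" for I
  proof -
    assume "ok I" "I \<noteq> {}"
    then have "I \<in> cf ` {0..<card CH}" using cf by (simp add: bij_betw_def CH_def)
    then show ?thesis by (auto simp: k_def)
  qed
  have X: "subtopology (powertop_real UNIV) K = top_of_set K" by (simp add: euclidean_product_topology)
  have cont: "continuous_on (disc_set (d i)) (\<Phi> i)" for i
    unfolding \<Phi>_def using continuous_on_compose[OF cont_psi relabel_cont]
    by (simp add: o_def)
  have PhiK: "i < k \<Longrightarrow> x \<in> disc_set (d i) \<Longrightarrow> \<Phi> i x \<in> K" for i x
    unfolding \<Phi>_def K_def d_def using cfCH relabel_in_K psi_in_sdelta by blast
  have open_sub: "open_disc_set n \<subseteq> disc_set n" for n by (auto simp: open_disc_set_def disc_set_def)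
  have sph_sub: "sphere_set n \<subseteq> disc_set n" for n by (auto simp: sphere_set_def disc_set_def)
  have supp_open: "i < k \<Longrightarrow> x \<in> open_disc_set (d i) \<Longrightarrow> {j. \<Phi> i x j \<noteq> 0} = cf i" for i x
    unfolding \<Phi>_def d_def using cfCH relabel_supp_open psi_in_osdelta by blast
  have cover: "y \<in> K \<Longrightarrow> \<exists>i<k. {j. y j \<noteq> 0} = cf i \<and> y \<in> \<Phi> i ` open_disc_set (d i)" for y
  proof -
    assume y: "y \<in> K"
    define I where "I = {j. y j \<noteq> 0}"
    have I: "ok I" "I \<noteq> {}" using K_supp y by (auto simp: I_def K_def)
    obtain i where i: "i < k" "cf i = I" using cfonto[OF I] by blast
    obtain z where z: "z \<in> osdelta (card I - 1)" "relabel I z = y" using relabel_onto[of y I] y I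
      by (auto simp: K_def I_def)
    obtain x where x: "x \<in> open_disc_set (d i)" "Psi (d i) x = z" using psi_onto z(1) i by (auto simp: d_def)
    have "y = \<Phi> i x" using x z i by (simp add: \<Phi>_def)
    then show ?thesis using i x by (auto simp: I_def)
  qed
  have inj: "i < k \<Longrightarrow> inj_on (\<Phi> i) (disc_set (d i))" for i
  proof -
    assume i: "i < k"
    have "inj_on (relabel (cf i) \<circ> Psi (d i)) (disc_set (d i))"
    proof (rule comp_inj_on)
      show "inj_on (Psi (d i)) (disc_set (d i))" by (rule psi_inj)
      have "inj_on (relabel (cf i)) (sdelta (d i))"
        unfolding d_def using cfCH[OF i] ok_finite relabel_inj by blast
      moreover have "Psi (d i) ` disc_set (d i) \<subseteq> sdelta (d i)" using psi_in_sdelta by blast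
      ultimately show "inj_on (relabel (cf i)) (Psi (d i) ` disc_set (d i))" using inj_on_subset by blast
    qed
    then show ?thesis by (simp add: \<Phi>_def o_def)
  qed
  have hm: "homeomorphic_map (top_of_set (open_disc_set (d i))) (top_of_set (\<Phi> i ` open_disc_set (d i))) (\<Phi> i)"
    if i: "i < k" for i
  proof -
    obtain g where g: "homeomorphism (disc_set (d i)) (\<Phi> i ` disc_set (d i)) (\<Phi> i) g"
      using homeomorphism_compact[OF compact_disc cont refl inj[OF i]] by blast
    then have g2: "homeomorphism (open_disc_set (d i)) (\<Phi> i ` open_disc_set (d i)) (\<Phi> i) g"
      by (rule homeomorphism_of_subsets) (use open_sub in auto)
    show ?thesis unfolding homeomorphic_map_maps homeomorphic_maps_def
      using g2 by (auto simp: homeomorphism_def)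
  qed
  show ?thesis
    unfolding finite_CW_complex_dim_def
  proof (intro conjI exI[of _ k] exI[of _ d] exI[of _ \<Phi>])
    show "Hausdorff_space (subtopology (powertop_real UNIV) (Kset N ok))"
      by (intro Hausdorff_space_subtopology) (simp add: Hausdorff_space_product_topology Hausdorff_space_euclidean)
    show "\<forall>i<k. d i \<le> m"
    proof (intro allI impI)
      fix i assume "i < k"
      then have "card (cf i) \<le> Suc m" using cfCH okcard by blast
      then show "d i \<le> m" by (simp add: d_def)
    qed
    show "\<forall>i<k. continuous_map (subtopology (powertop_real UNIV) (disc_set (d i))) (subtopology (powertop_real UNIV) (Kset N ok)) (\<Phi> i)"
      using cont PhiK by (auto simp: euclidean_product_topology K_def)
    show "\<forall>i<k. homeomorphic_map (subtopology (powertop_real UNIV) (open_disc_set (d i)))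
            (subtopology (subtopology (powertop_real UNIV) (Kset N ok)) (\<Phi> i ` open_disc_set (d i))) (\<Phi> i)"
    proof (intro allI impI)
      fix i assume i: "i < k"
      have "Kset N ok \<inter> \<Phi> i ` open_disc_set (d i) = \<Phi> i ` open_disc_set (d i)"
        using PhiK[OF i] open_sub by (auto simp: K_def)
      then show "homeomorphic_map (subtopology (powertop_real UNIV) (open_disc_set (d i)))
            (subtopology (subtopology (powertop_real UNIV) (Kset N ok)) (\<Phi> i ` open_disc_set (d i))) (\<Phi> i)"
        using hm[OF i] by (simp add: euclidean_product_topology subtopology_subtopology)
    qed
    show "\<forall>i<k. \<forall>j<k. i \<noteq> j \<longrightarrow> \<Phi> i ` open_disc_set (d i) \<inter> \<Phi> j ` open_disc_set (d j) = {}"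
    proof (intro allI impI)
      fix i j assume ij: "i < k" "j < k" "i \<noteq> j"
      show "\<Phi> i ` open_disc_set (d i) \<inter> \<Phi> j ` open_disc_set (d j) = {}"
      proof (rule ccontr)
        assume "\<Phi> i ` open_disc_set (d i) \<inter> \<Phi> j ` open_disc_set (d j) \<noteq> {}"
        then obtain x x' where "x \<in> open_disc_set (d i)" "x' \<in> open_disc_set (d j)" "\<Phi> i x = \<Phi> j x'" by blast
        then have "cf i = cf j" using supp_open ij by metis
        then show False using cfinj ij by blast
      qed
    qed
    show "(\<Union>i<k. \<Phi> i ` open_disc_set (d i)) = topspace (subtopology (powertop_real UNIV) (Kset N ok))"
    proof
      show "(\<Union>i<k. \<Phi> i ` open_disc_set (d i)) \<subseteq> topspace (subtopology (powertop_real UNIV) (Kset N ok))"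
        using PhiK open_sub by (force simp: euclidean_product_topology K_def)
      show "topspace (subtopology (powertop_real UNIV) (Kset N ok)) \<subseteq> (\<Union>i<k. \<Phi> i ` open_disc_set (d i))"
        using cover by (force simp: euclidean_product_topology K_def)
    qed
    show "\<forall>i<k. \<Phi> i ` sphere_set (d i) \<subseteq> (\<Union>j\<in>{j. j < k \<and> d j < d i}. \<Phi> j ` open_disc_set (d j))"
    proof (intro allI impI subsetI)
      fix i y assume i: "i < k" and "y \<in> \<Phi> i ` sphere_set (d i)"
      then obtain x where x: "x \<in> sphere_set (d i)" "y = \<Phi> i x" by blast
      have xd: "x \<in> disc_set (d i)" using x sph_sub by blast
      have z1: "Psi (d i) x \<in> sdelta (d i)" using psi_in_sdelta[OF xd] .
      have z2: "Psi (d i) x \<notin> osdelta (d i)" using psi_sphere[OF x(1)] by (force simp: osdelta_def)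
      have sub: "{j. y j \<noteq> 0} \<subset> cf i" using relabel_supp_bdry[of "cf i" "Psi (d i) x"] cfCH[OF i] z1 z2 x(2)
        by (simp add: \<Phi>_def d_def)
      have yK: "y \<in> K" using PhiK[OF i xd] x by simp
      obtain j where j: "j < k" "{l. y l \<noteq> 0} = cf j" "y \<in> \<Phi> j ` open_disc_set (d j)" using cover[OF yK] by blast
      have "card (cf j) < card (cf i)" using sub j(2) cfCH[OF i] ok_finite psi_in_sdelta
        by (metis psubset_card_mono)
      moreover have "0 < card (cf j)" using cfCH[OF j(1)] ok_finite card_gt_0_iff by blast
      ultimately have "d j < d i" by (simp add: d_def)
      then show "y \<in> (\<Union>j\<in>{j. j < k \<and> d j < d i}. \<Phi> j ` open_disc_set (d j))" using j by blast
    qed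
  qed
qed

end

definition vert :: "'a::euclidean_space set \<Rightarrow> 'a set" where
  "vert S = {v. v extreme_point_of S}"

definition rep :: "'a::euclidean_space set \<Rightarrow> 'a \<Rightarrow> ('a \<Rightarrow> real) \<Rightarrow> bool" where
  "rep S x u \<longleftrightarrow> (\<forall>v. v \<notin> vert S \<longrightarrow> u v = 0) \<and> (\<forall>v. 0 \<le> u v) \<and> sum u (vert S) = 1
                 \<and> (\<Sum>v\<in>vert S. u v *\<^sub>R v) = x"

lemma vert_convex_hull: "\<not> affine_dependent C \<Longrightarrow> vert (convex hull C) = C"
  by (auto simp: vert_def extreme_point_of_convex_hull_affine_independent)

lemma simplex_vert:
  assumes "n simplex S"
  shows "finite (vert S)" "\<not> affine_dependent (vert S)" "S = convex hull (vert S)"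
    "int (card (vert S)) = n + 1"
proof -
  obtain C where C: "finite C" "\<not> affine_dependent C" "int (card C) = n + 1" "S = convex hull C"
    using assms by (auto simp: simplex)
  then have "vert S = C" using vert_convex_hull by blast
  then show "finite (vert S)" "\<not> affine_dependent (vert S)" "S = convex hull (vert S)"
    "int (card (vert S)) = n + 1" using C by auto
qed

lemma rep_unique_gen:
  fixes c :: "'a::euclidean_space set"
  assumes "finite c" "\<not> affine_dependent c"
    and "\<forall>v. v \<notin> c \<longrightarrow> u v = 0" "\<forall>v. v \<notin> c \<longrightarrow> w v = 0"
    and "sum u c = 1" "sum w c = 1" "(\<Sum>v\<in>c. u v *\<^sub>R v) = (\<Sum>v\<in>c. w v *\<^sub>R v)"
  shows "u = w"
proof -
  define U where "U = (\<lambda>v. u v - w v)"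
  have "sum U c = 0" using assms by (simp add: U_def sum_subtractf)
  moreover have "(\<Sum>v\<in>c. U v *\<^sub>R v) = 0"
    using assms(7) by (simp add: U_def scaleR_diff_left sum_subtractf)
  ultimately have "\<forall>v\<in>c. U v = 0" using assms(2) affine_dependent_explicit_finite[OF assms(1)] by blast
  then show ?thesis using assms(3,4) by (auto simp: U_def fun_eq_iff)
qed

lemma rep_unique:
  assumes "n simplex S" "rep S x u" "rep S x w" shows "u = w"
  using assms simplex_vert[OF assms(1)] unfolding rep_def
  by (intro rep_unique_gen[of "vert S"]) auto

lemma rep_exists:
  assumes "n simplex S" "x \<in> S" shows "\<exists>u. rep S x u"
proof -
  note sv = simplex_vert[OF assms(1)]
  have "x \<in> convex hull (vert S)" using assms(2) sv(3) by metis
  then have "x \<in> {y. \<exists>u. (\<forall>v\<in>vert S. 0 \<le> u v) \<and> sum u (vert S) = 1 \<and> (\<Sum>v\<in>vert S. u v *\<^sub>R v) = y}"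
    using convex_hull_finite[OF sv(1)] by blast
  then obtain u where u: "\<forall>v\<in>vert S. 0 \<le> u v" "sum u (vert S) = 1" "(\<Sum>v\<in>vert S. u v *\<^sub>R v) = x"
    by blast
  define u' where "u' = (\<lambda>v. if v \<in> vert S then u v else 0)"
  have "sum u' (vert S) = 1" "(\<Sum>v\<in>vert S. u' v *\<^sub>R v) = x" using u by (simp_all add: u'_def)
  then have "rep S x u'" using u by (auto simp: rep_def u'_def)
  then show ?thesis by blast
qed

lemma rep_in:
  assumes "n simplex S" "rep S x u" shows "x \<in> S"
proof -
  note sv = simplex_vert[OF assms(1)]
  have "x \<in> convex hull (vert S)" unfolding convex_hull_finite[OF sv(1)]
    using assms(2) unfolding rep_def by blast
  then show ?thesis using sv(3) by metis
qed

lemma rep_support_subset: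
  fixes c :: "'a::euclidean_space set"
  assumes "n simplex S" "c \<subseteq> vert S" "x \<in> convex hull c"
  shows "\<exists>u. rep S x u \<and> (\<forall>v. v \<notin> c \<longrightarrow> u v = 0)"
proof -
  note sv = simplex_vert[OF assms(1)]
  have fc: "finite c" using sv(1) assms(2) finite_subset by blast
  obtain u where u: "\<forall>v\<in>c. 0 \<le> u v" "sum u c = 1" "(\<Sum>v\<in>c. u v *\<^sub>R v) = x"
    using assms(3) convex_hull_finite[OF fc] by auto
  define u' where "u' = (\<lambda>v. if v \<in> c then u v else 0)"
  have "sum u' (vert S) = sum u' c"
    using assms(2) sv(1) by (intro sum.mono_neutral_right) (auto simp: u'_def)
  moreover have "(\<Sum>v\<in>vert S. u' v *\<^sub>R v) = (\<Sum>v\<in>c. u' v *\<^sub>R v)"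
    using assms(2) sv(1) by (intro sum.mono_neutral_right) (auto simp: u'_def)
  ultimately have "rep S x u'" using u assms(2) by (auto simp: rep_def u'_def)
  then show ?thesis by (auto simp: u'_def)
qed

context
  fixes B :: "'a::euclidean_space set set"
  assumes B: "simplicial_complex B"
begin

lemma B_simplex: "S \<in> B \<Longrightarrow> \<exists>n. n simplex S"
  using B by (simp add: simplicial_complex_def)

lemma B_finite: "finite B" using B by (simp add: simplicial_complex_def)

lemma B_face: "S \<in> B \<Longrightarrow> T \<in> B \<Longrightarrow> (S \<inter> T) face_of S"
  using B by (simp add: simplicial_complex_def)

lemma rep_compat:
  assumes S: "S \<in> B" and T: "T \<in> B" and u: "rep S x u" and w: "rep T x w"
  shows "u = w"
proof -
  obtain n where n: "n simplex S" using B_simplex[OF S] by blast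
  obtain n' where n': "n' simplex T" using B_simplex[OF T] by blast
  note sv = simplex_vert[OF n] and tv = simplex_vert[OF n']
  have xS: "x \<in> S" using rep_in[OF n u] .
  have xT: "x \<in> T" using rep_in[OF n' w] .
  have f1: "(S \<inter> T) face_of convex hull (vert S)" using B_face[OF S T] sv(3) by simp
  have f2: "(S \<inter> T) face_of convex hull (vert T)" using B_face[OF T S] tv(3) by (simp add: Int_commute)
  obtain c where c: "c \<subseteq> vert S" "S \<inter> T = convex hull c"
    using f1 face_of_convex_hull_affine_independent[OF sv(2)] by blast
  obtain c' where c': "c' \<subseteq> vert T" "S \<inter> T = convex hull c'"
    using f2 face_of_convex_hull_affine_independent[OF tv(2)] by blast
  have "vert (S \<inter> T) = c" using c vert_convex_hull affine_independent_subset sv(2) by metis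
  moreover have "vert (S \<inter> T) = c'" using c' vert_convex_hull affine_independent_subset tv(2) by metis
  ultimately have cc: "c = c'" by simp
  obtain u' where u': "rep S x u'" "\<forall>v. v \<notin> c \<longrightarrow> u' v = 0"
    using rep_support_subset[OF n c(1)] xS xT c(2) by blast
  obtain w' where w': "rep T x w'" "\<forall>v. v \<notin> c \<longrightarrow> w' v = 0"
    using rep_support_subset[OF n' c'(1)] xS xT c'(2) cc by blast
  have uu: "u = u'" using rep_unique[OF n u u'(1)] .
  have ww: "w = w'" using rep_unique[OF n' w w'(1)] .
  have fc: "finite c" using sv(1) c(1) finite_subset by blast
  have ic: "\<not> affine_dependent c" using sv(2) c(1) affine_independent_subset by blast
  have s1: "sum u' c = 1" "(\<Sum>v\<in>c. u' v *\<^sub>R v) = x"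
  proof -
    have "sum u' (vert S) = sum u' c" "(\<Sum>v\<in>vert S. u' v *\<^sub>R v) = (\<Sum>v\<in>c. u' v *\<^sub>R v)"
      using c(1) sv(1) u'(2) by (auto intro: sum.mono_neutral_right)
    then show "sum u' c = 1" "(\<Sum>v\<in>c. u' v *\<^sub>R v) = x" using u'(1) by (auto simp: rep_def)
  qed
  have s2: "sum w' c = 1" "(\<Sum>v\<in>c. w' v *\<^sub>R v) = x"
  proof -
    have "sum w' (vert T) = sum w' c" "(\<Sum>v\<in>vert T. w' v *\<^sub>R v) = (\<Sum>v\<in>c. w' v *\<^sub>R v)"
      using c'(1) cc tv(1) w'(2) by (auto intro: sum.mono_neutral_right)
    then show "sum w' c = 1" "(\<Sum>v\<in>c. w' v *\<^sub>R v) = x" using w'(1) by (auto simp: rep_def)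
  qed
  have "u' = w'" using rep_unique_gen[OF fc ic u'(2) w'(2) s1(1) s2(1)] s1(2) s2(2) by simp
  then show ?thesis using uu ww by simp
qed

definition lam :: "'a \<Rightarrow> 'a \<Rightarrow> real" where
  "lam x = (SOME u. \<exists>S\<in>B. rep S x u)"

lemma lam_eq: "S \<in> B \<Longrightarrow> rep S x u \<Longrightarrow> lam x = u"
proof -
  assume S: "S \<in> B" and u: "rep S x u"
  have "\<exists>S\<in>B. rep S x (lam x)" unfolding lam_def
    using someI_ex[of "\<lambda>u. \<exists>S\<in>B. rep S x u"] S u by blast
  then obtain T where "T \<in> B" "rep T x (lam x)" by blast
  then show ?thesis using rep_compat[OF S _ u] by metis
qed

lemma lam_rep: "S \<in> B \<Longrightarrow> x \<in> S \<Longrightarrow> rep S x (lam x)"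
  using rep_exists B_simplex lam_eq by metis


lemma lam_cont_simplex:
  assumes S: "S \<in> B" shows "continuous_on S (\<lambda>x. lam x v)"
proof -
  obtain n where n: "n simplex S" using B_simplex[OF S] by blast
  note sv = simplex_vert[OF n]
  show ?thesis
  proof (cases "vert S = {}")
    case True
    then have "S = {}" using sv(3) by simp
    then show ?thesis by simp
  next
    case False
    then obtain v0 where v0: "v0 \<in> vert S" by blast
    define c' where "c' = vert S - {v0}"
    have fc': "finite c'" using sv(1) by (simp add: c'_def)
    have ins: "insert v0 c' = vert S" using v0 by (auto simp: c'_def)
    have ind: "\<not> dependent ((+) (- v0) ` c')"
      using affine_dependent_iff_dependent[of v0 c'] sv(2) ins by (simp add: c'_def)
    have key: "- v0 + x = (\<Sum>w\<in>c'. lam x w *\<^sub>R (- v0 + w))" if x: "x \<in> S" for x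
    proof -
      have r: "rep S x (lam x)" using lam_rep[OF S x] .
      then have s1: "sum (lam x) (vert S) = 1" and s2: "(\<Sum>w\<in>vert S. lam x w *\<^sub>R w) = x"
        by (auto simp: rep_def)
      have "sum (lam x) c' = 1 - lam x v0" using s1 sum.remove[OF sv(1) v0, of "lam x"] by (simp add: c'_def)
      moreover have "(\<Sum>w\<in>c'. lam x w *\<^sub>R w) = x - lam x v0 *\<^sub>R v0"
        using s2 sum.remove[OF sv(1) v0, of "\<lambda>w. lam x w *\<^sub>R w"] by (simp add: c'_def algebra_simps)
      moreover have "(\<Sum>w\<in>c'. lam x w *\<^sub>R (- v0 + w)) = (\<Sum>w\<in>c'. lam x w *\<^sub>R w) - (sum (lam x) c') *\<^sub>R v0"
        by (simp add: algebra_simps sum_subtractf scaleR_sum_left)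
      ultimately have "(\<Sum>w\<in>c'. lam x w *\<^sub>R (- v0 + w)) = - ((1 - lam x v0) *\<^sub>R v0) + (x - lam x v0 *\<^sub>R v0)"
        by simp
      also have "\<dots> = - v0 + x" by (simp add: algebra_simps)
      finally show ?thesis by simp
    qed
    have exg: "\<forall>w\<in>c'. \<exists>g. linear g \<and> (\<forall>y\<in>(+) (- v0) ` c'. g y = (if y = - v0 + w then 1 else (0::real)))"
      using ind by (intro ballI linear_independent_extend) 
    obtain G :: "'a \<Rightarrow> 'a \<Rightarrow> real" where G0: "\<forall>w\<in>c'. linear (G w) \<and> (\<forall>y\<in>(+) (- v0) ` c'. G w y = (if y = - v0 + w then 1 else 0))"
      using bchoice[OF exg] by blast
    then have G: "\<And>w. w \<in> c' \<Longrightarrow> linear (G w)"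
      "\<And>w y. w \<in> c' \<Longrightarrow> y \<in> (+) (- v0) ` c' \<Longrightarrow> G w y = (if y = - v0 + w then 1 else 0)"
      by auto
    have contc: "\<exists>f. continuous_on UNIV f \<and> (\<forall>x\<in>S. lam x w = f x)" if w: "w \<in> c'" for w
    proof (intro exI conjI ballI)
      have cg: "continuous_on UNIV (G w)" using G(1)[OF w]
        by (simp add: linear_continuous_on linear_conv_bounded_linear[symmetric])
      show "continuous_on UNIV (\<lambda>x. G w (- v0 + x))"
        by (rule continuous_on_compose2[OF cg]) (auto intro!: continuous_intros)
      fix x assume x: "x \<in> S"
      have "G w (- v0 + x) = (\<Sum>w'\<in>c'. lam x w' * G w (- v0 + w'))"
        using key[OF x] G(1)[OF w] by (simp add: real_vector.linear_sum linear_cmul)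
      also have "\<dots> = (\<Sum>w'\<in>c'. if w' = w then lam x w' else 0)"
        by (rule sum.cong) (auto simp: G(2)[OF w])
      also have "\<dots> = lam x w" using w fc' by simp
      finally show "lam x w = G w (- v0 + x)" by simp
    qed
    show ?thesis
    proof (cases "v \<in> c'")
      case True
      then obtain f where f: "continuous_on UNIV f" "\<forall>x\<in>S. lam x v = f x" using contc by blast
      have "continuous_on S f" using f(1) by (rule continuous_on_subset) auto
      then show ?thesis by (rule continuous_on_eq) (use f(2) in auto)
    next
      case False
      show ?thesis
      proof (cases "v = v0")
        case True
        have exf: "\<forall>w\<in>c'. \<exists>f. continuous_on UNIV f \<and> (\<forall>x\<in>S. lam x w = f x)" using contc by blast
        obtain F :: "'a \<Rightarrow> 'a \<Rightarrow> real" where F0: "\<forall>w\<in>c'. continuous_on UNIV (F w) \<and> (\<forall>x\<in>S. lam x w = F w x)"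
          using bchoice[OF exf] by blast
        then have F: "\<And>w. w \<in> c' \<Longrightarrow> continuous_on UNIV (F w)"
          "\<And>w x. w \<in> c' \<Longrightarrow> x \<in> S \<Longrightarrow> lam x w = F w x" by auto
        have "continuous_on S (\<lambda>x. 1 - (\<Sum>w\<in>c'. F w x))"
          using F(1) continuous_on_subset by (intro continuous_intros) blast
        moreover have "1 - (\<Sum>w\<in>c'. F w x) = lam x v" if x: "x \<in> S" for x
        proof -
          have "sum (lam x) (vert S) = 1" using lam_rep[OF S x] by (simp add: rep_def)
          then have "lam x v0 = 1 - sum (lam x) c'" using sum.remove[OF sv(1) v0, of "lam x"] by (simp add: c'_def)
          also have "sum (lam x) c' = (\<Sum>w\<in>c'. F w x)" using F(2) x by simp
          finally show ?thesis using True by simp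
        qed
        ultimately show ?thesis by (rule continuous_on_eq)
      next
        case False
        then have "v \<notin> vert S" using \<open>v \<notin> c'\<close> by (auto simp: c'_def)
        then have "\<forall>x\<in>S. lam x v = 0" using lam_rep[OF S] by (auto simp: rep_def)
        then show ?thesis by (intro continuous_on_eq[OF continuous_on_const[of S 0]]) auto
      qed
    qed
  qed
qed

lemma closed_B: "S \<in> B \<Longrightarrow> closed S"
proof -
  assume "S \<in> B"
  then obtain n where n: "n simplex S" using B_simplex by blast
  have "compact (convex hull (vert S))" using simplex_vert(1)[OF n] by (rule finite_imp_compact_convex_hull)
  then show "closed S" using simplex_vert(3)[OF n] compact_imp_closed by metis
qed

lemma lam_cont: "continuous_on (\<Union>B) (\<lambda>x. lam x v)"
  using continuous_on_closed_Union[of B "\<lambda>S. S" "\<lambda>x. lam x v"] B_finite closed_B lam_cont_simplex by simp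

end

lemma continuous_on_Max0:
  assumes "finite I" "\<And>i. i \<in> I \<Longrightarrow> continuous_on S (f i)"
  shows "continuous_on S (\<lambda>x. Max (insert 0 ((\<lambda>i. f i x :: real) ` I)))"
proof (cases "I = {}")
  case True then show ?thesis by simp
next
  case False
  have "continuous_on S (\<lambda>x. max 0 (Max ((\<lambda>i. f i x) ` I)))"
    using assms False by (intro continuous_on_max continuous_on_const continuous_on_Max_fun) auto
  moreover have "\<And>x. Max (insert 0 ((\<lambda>i. f i x) ` I)) = max 0 (Max ((\<lambda>i. f i x) ` I))"
    using assms False by (simp add: Max_insert)
  ultimately show ?thesis by simp
qed

locale LA =
  fixes B A :: "'a::euclidean_space set set" and m N :: nat and e :: "nat \<Rightarrow> 'a set"
  assumes B: "simplicial_complex B"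
    and AB: "A \<subseteq> B"
    and dimA: "\<forall>S\<in>A. \<exists>n. n \<le> int m \<and> n simplex S"
    and e: "bij_betw e {..<N} (A - {{}})"
begin

definition Vt :: "nat \<Rightarrow> 'a set" where "Vt i = vert (e i)"
definition V :: "'a set" where "V = \<Union> (vert ` B)"
definition Mn :: "nat \<Rightarrow> 'a \<Rightarrow> real" where "Mn i x = Min ((\<lambda>v. lam B x v) ` Vt i)"
definition Mx :: "nat \<Rightarrow> 'a \<Rightarrow> real" where "Mx i x = Max (insert 0 ((\<lambda>v. lam B x v) ` (V - Vt i)))"
definition W :: "nat \<Rightarrow> 'a \<Rightarrow> real" where "W i x = max 0 (Mn i x - Mx i x)"
definition ok :: "nat set \<Rightarrow> bool" where
  "ok I \<longleftrightarrow> I \<subseteq> {..<N} \<and> (\<forall>i\<in>I. \<forall>j\<in>I. Vt i \<subseteq> Vt j \<or> Vt j \<subseteq> Vt i)"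
definition bary :: "nat \<Rightarrow> 'a" where "bary i = (1 / real (card (Vt i))) *\<^sub>R (\<Sum>v\<in>Vt i. v)"
definition D :: "'a \<Rightarrow> real" where "D x = (\<Sum>i<N. W i x)"
definition r :: "'a \<Rightarrow> nat \<Rightarrow> real" where "r x = (\<lambda>i. if i < N then W i x / D x else 0)"
definition g :: "(nat \<Rightarrow> real) \<Rightarrow> 'a" where "g y = (\<Sum>i<N. y i *\<^sub>R bary i)"

lemma eA: "i < N \<Longrightarrow> e i \<in> A \<and> e i \<noteq> {}"
  using e by (auto dest: bij_betwE)

lemma eB: "i < N \<Longrightarrow> e i \<in> B" using eA AB by blast

lemma e_inj: "i < N \<Longrightarrow> j < N \<Longrightarrow> e i = e j \<Longrightarrow> i = j"
  using e by (auto simp: bij_betw_def inj_on_def)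

lemma e_simplex: "i < N \<Longrightarrow> \<exists>n. n \<le> int m \<and> n simplex (e i)"
  using eA dimA by blast

lemma Vt_props:
  assumes "i < N"
  shows "finite (Vt i)" "\<not> affine_dependent (Vt i)" "e i = convex hull (Vt i)" "Vt i \<noteq> {}"
    "card (Vt i) \<le> Suc m" "0 < card (Vt i)"
proof -
  obtain n where n: "n \<le> int m" "n simplex (e i)" using e_simplex[OF assms] by blast
  note sv = simplex_vert[OF n(2)]
  show "finite (Vt i)" "\<not> affine_dependent (Vt i)" "e i = convex hull (Vt i)" using sv by (auto simp: Vt_def)
  show ne: "Vt i \<noteq> {}" using sv(3) eA[OF assms] by (auto simp: Vt_def)
  show "card (Vt i) \<le> Suc m" using sv(4) n(1) by (simp add: Vt_def)
  show "0 < card (Vt i)" using ne sv(1) by (simp add: Vt_def card_gt_0_iff)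
qed

lemma Vt_inj: "i < N \<Longrightarrow> j < N \<Longrightarrow> Vt i = Vt j \<Longrightarrow> i = j"
  using Vt_props(3) e_inj by metis

lemma finite_V: "finite V"
proof -
  have "finite B" using B by (simp add: simplicial_complex_def)
  moreover have "finite (vert S)" if "S \<in> B" for S
    using B that simplex_vert(1) by (metis simplicial_complex_def)
  ultimately show ?thesis by (simp add: V_def)
qed

lemma Vt_V: "i < N \<Longrightarrow> Vt i \<subseteq> V"
  using eB by (auto simp: V_def Vt_def)

lemma ok_N: "ok I \<Longrightarrow> I \<subseteq> {..<N}" by (simp add: ok_def)
lemma ok_down: "ok I \<Longrightarrow> J \<subseteq> I \<Longrightarrow> ok J" unfolding ok_def by blast
lemma ok_card: "ok I \<Longrightarrow> card I \<le> Suc m"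
proof -
  assume okI: "ok I"
  have fI: "finite I" using ok_N[OF okI] finite_subset by blast
  have "inj_on (\<lambda>i. card (Vt i)) I"
  proof (rule inj_onI)
    fix i j assume ij: "i \<in> I" "j \<in> I" "card (Vt i) = card (Vt j)"
    have N: "i < N" "j < N" using ij ok_N[OF okI] by auto
    have "Vt i \<subseteq> Vt j \<or> Vt j \<subseteq> Vt i" using okI ij by (simp add: ok_def)
    then have "Vt i = Vt j" using ij(3) Vt_props(1)[OF N(1)] Vt_props(1)[OF N(2)] by (metis card_subset_eq)
    then show "i = j" using Vt_inj N by blast
  qed
  moreover have "(\<lambda>i. card (Vt i)) ` I \<subseteq> {1..Suc m}"
    using Vt_props(5,6) ok_N[OF okI] by (auto simp: Suc_le_eq)
  ultimately have "card I \<le> card {1..Suc m}" using card_inj_on_le by (metis finite_atLeastAtMost)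
  then show ?thesis by simp
qed

lemma lam_nonneg: "x \<in> \<Union>B \<Longrightarrow> 0 \<le> lam B x v"
  using lam_rep[OF B] by (auto simp: rep_def)

lemma carrier:
  assumes S: "S \<in> B" and x: "x \<in> rel_interior S"
  shows "\<And>v. v \<in> vert S \<Longrightarrow> 0 < lam B x v" "\<And>v. v \<notin> vert S \<Longrightarrow> lam B x v = 0"
proof -
  obtain n where n: "n simplex S" using B S by (auto simp: simplicial_complex_def)
  note sv = simplex_vert[OF n]
  have "x \<in> rel_interior (convex hull (vert S))" using x sv(3) by metis
  then obtain u where u: "\<forall>v\<in>vert S. 0 < u v" "sum u (vert S) = 1" "(\<Sum>v\<in>vert S. u v *\<^sub>R v) = x"
    using rel_interior_convex_hull_explicit[OF sv(2)] by blast
  define u' where "u' = (\<lambda>v. if v \<in> vert S then u v else 0)"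
  have "sum u' (vert S) = 1" "(\<Sum>v\<in>vert S. u' v *\<^sub>R v) = x" using u by (simp_all add: u'_def)
  then have "rep S x u'" using u by (auto simp: rep_def u'_def less_imp_le)
  then have l: "lam B x = u'" using lam_eq[OF B S] by blast
  show "\<And>v. v \<in> vert S \<Longrightarrow> 0 < lam B x v" "\<And>v. v \<notin> vert S \<Longrightarrow> lam B x v = 0"
    using u(1) by (auto simp: l u'_def)
qed

lemma W_nonneg: "0 \<le> W i x" by (simp add: W_def)

lemma W_sep:
  assumes "0 < W i x" "i < N" "a \<in> Vt i" "b \<in> V" "b \<notin> Vt i"
  shows "lam B x b < lam B x a"
proof -
  have "Mn i x \<le> lam B x a" unfolding Mn_def using assms(3) Vt_props(1)[OF assms(2)] by (intro Min_le) auto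
  moreover have "lam B x b \<le> Mx i x" unfolding Mx_def using assms(4,5) finite_V by (intro Max_ge) auto
  moreover have "Mx i x < Mn i x" using assms(1) by (simp add: W_def)
  ultimately show ?thesis by linarith
qed

lemma W_chain:
  assumes "0 < W i x" "0 < W j x" "i < N" "j < N"
  shows "Vt i \<subseteq> Vt j \<or> Vt j \<subseteq> Vt i"
proof (rule ccontr)
  assume "\<not> (Vt i \<subseteq> Vt j \<or> Vt j \<subseteq> Vt i)"
  then obtain a b where ab: "a \<in> Vt i" "a \<notin> Vt j" "b \<in> Vt j" "b \<notin> Vt i" by blast
  have "lam B x b < lam B x a" using W_sep[OF assms(1,3) ab(1) _ ab(4)] ab(3) Vt_V[OF assms(4)] by blast
  moreover have "lam B x a < lam B x b" using W_sep[OF assms(2,4) ab(3) _ ab(2)] ab(1) Vt_V[OF assms(3)] by blast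
  ultimately show False by simp
qed

lemma W_sub:
  assumes "0 < W i x" "i < N" "\<And>a. a \<notin> T \<Longrightarrow> lam B x a = 0"
  shows "Vt i \<subseteq> T"
proof
  fix a assume a: "a \<in> Vt i"
  show "a \<in> T"
  proof (rule ccontr)
    assume "a \<notin> T"
    then have "lam B x a = 0" using assms(3) by blast
    then have "Mn i x \<le> 0" unfolding Mn_def using a Vt_props(1)[OF assms(2)]
      by (metis (mono_tags, lifting) Min_le finite_imageI image_eqI)
    moreover have "0 \<le> Mx i x" unfolding Mx_def using finite_V by (intro Max_ge) auto
    ultimately show False using assms(1) by (simp add: W_def)
  qed
qed

lemma W_self:
  assumes "i < N" "x \<in> rel_interior (e i)"
  shows "0 < W i x"
proof -
  have pos: "\<And>v. v \<in> Vt i \<Longrightarrow> 0 < lam B x v" and z: "\<And>v. v \<notin> Vt i \<Longrightarrow> lam B x v = 0"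
    using carrier[OF eB[OF assms(1)] assms(2)] by (auto simp: Vt_def)
  have "0 < Mn i x" unfolding Mn_def using Vt_props(1,4)[OF assms(1)] pos by (subst Min_gr_iff) auto
  moreover have "insert 0 ((\<lambda>v. lam B x v) ` (V - Vt i)) = {0}" using z by auto
  then have "Mx i x = 0" unfolding Mx_def by (metis Max_singleton)
  ultimately show ?thesis by (simp add: W_def)
qed

lemma W_cont: "i < N \<Longrightarrow> continuous_on (\<Union>B) (W i)"
  unfolding W_def Mn_def Mx_def
  using Vt_props(1,4) finite_V lam_cont[OF B]
  by (intro continuous_intros continuous_on_Min_fun continuous_on_Max0) auto


definition ucoef :: "(nat \<Rightarrow> real) \<Rightarrow> 'a \<Rightarrow> real" where
  "ucoef y v = (\<Sum>i<N. y i * (if v \<in> Vt i then 1 / real (card (Vt i)) else 0))"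

lemma key_conv:
  assumes y0: "\<And>i. 0 \<le> y i" and ys: "(\<Sum>i<N. y i) = 1"
    and i0: "i0 < N" "0 < y i0" and sub: "\<And>i. i < N \<Longrightarrow> y i \<noteq> 0 \<Longrightarrow> Vt i \<subseteq> Vt i0"
  shows "rep (e i0) (g y) (ucoef y)" "g y \<in> rel_interior (e i0)" "lam B (g y) = ucoef y"
proof -
  define c where "c = Vt i0"
  note cp = Vt_props[OF i0(1)]
  have vc: "vert (e i0) = c" by (simp add: c_def Vt_def)
  have zero: "ucoef y v = 0" if "v \<notin> c" for v
    unfolding ucoef_def using sub that by (intro sum.neutral) (auto simp: c_def)
  have nn: "0 \<le> ucoef y v" for v unfolding ucoef_def using y0 by (intro sum_nonneg) auto
  have pos: "0 < ucoef y v" if v: "v \<in> c" for v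
  proof -
    have "y i0 * (if v \<in> Vt i0 then 1 / real (card (Vt i0)) else 0) \<le> ucoef y v"
      unfolding ucoef_def using i0(1) y0 by (intro member_le_sum) auto
    moreover have "0 < y i0 * (if v \<in> Vt i0 then 1 / real (card (Vt i0)) else 0)"
      using v i0(2) cp(6) by (simp add: c_def)
    ultimately show ?thesis by linarith
  qed
  have inner: "y i * (\<Sum>v\<in>c. if v \<in> Vt i then 1 / real (card (Vt i)) else 0) = y i" if i: "i < N" for i
  proof (cases "y i = 0")
    case False
    then have "Vt i \<subseteq> c" using sub i by (simp add: c_def)
    then have "(\<Sum>v\<in>c. if v \<in> Vt i then 1 / real (card (Vt i)) else 0) = (\<Sum>v\<in>Vt i. 1 / real (card (Vt i)))"
      using cp(1) by (simp add: sum.If_cases c_def Int_absorb1)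
    also have "\<dots> = 1" using Vt_props(6)[OF i] by simp
    finally show ?thesis by simp
  qed simp
  have s1: "sum (ucoef y) c = 1"
  proof -
    have "sum (ucoef y) c = (\<Sum>i<N. y i * (\<Sum>v\<in>c. if v \<in> Vt i then 1 / real (card (Vt i)) else 0))"
      unfolding ucoef_def by (subst sum.swap) (simp add: sum_distrib_left)
    also have "\<dots> = (\<Sum>i<N. y i)" using inner by (intro sum.cong) auto
    finally show ?thesis using ys by simp
  qed
  have inner2: "y i *\<^sub>R (\<Sum>v\<in>c. (if v \<in> Vt i then 1 / real (card (Vt i)) else 0) *\<^sub>R v) = y i *\<^sub>R bary i"
    if i: "i < N" for i
  proof (cases "y i = 0")
    case False
    then have "Vt i \<subseteq> c" using sub i by (simp add: c_def)
    have "(\<Sum>v\<in>c. (if v \<in> Vt i then 1 / real (card (Vt i)) else 0) *\<^sub>R v)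
        = (\<Sum>v\<in>c. if v \<in> Vt i then (1 / real (card (Vt i))) *\<^sub>R v else 0)"
      by (intro sum.cong) auto
    also have "\<dots> = (\<Sum>v\<in>c \<inter> Vt i. (1 / real (card (Vt i))) *\<^sub>R v)"
      using cp(1) by (simp add: sum.inter_restrict c_def)
    also have "c \<inter> Vt i = Vt i" using \<open>Vt i \<subseteq> c\<close> by blast
    finally have "(\<Sum>v\<in>c. (if v \<in> Vt i then 1 / real (card (Vt i)) else 0) *\<^sub>R v) = (\<Sum>v\<in>Vt i. (1 / real (card (Vt i))) *\<^sub>R v)" .
    also have "\<dots> = bary i" by (simp add: bary_def scaleR_sum_right)
    finally show ?thesis by simp
  qed simp
  have s2: "(\<Sum>v\<in>c. ucoef y v *\<^sub>R v) = g y"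
  proof -
    have "(\<Sum>v\<in>c. ucoef y v *\<^sub>R v) = (\<Sum>i<N. y i *\<^sub>R (\<Sum>v\<in>c. (if v \<in> Vt i then 1 / real (card (Vt i)) else 0) *\<^sub>R v))"
      unfolding ucoef_def by (simp add: scaleR_sum_left scaleR_sum_right sum.swap[of _ c] scaleR_scaleR)
    also have "\<dots> = (\<Sum>i<N. y i *\<^sub>R bary i)" using inner2 by (intro sum.cong) auto
    finally show ?thesis by (simp add: g_def)
  qed
  show r: "rep (e i0) (g y) (ucoef y)" unfolding rep_def vc using zero nn s1 s2 by blast
  have "g y \<in> rel_interior (convex hull c)"
    unfolding rel_interior_convex_hull_explicit[OF cp(2)[folded c_def]] using pos s1 s2 by blast
  then show "g y \<in> rel_interior (e i0)" using cp(3) by (simp add: c_def)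
  show "lam B (g y) = ucoef y" using lam_eq[OF B eB[OF i0(1)] r] .
qed


lemma ou_sub: "open_union A \<subseteq> \<Union>B"
  unfolding open_union_def using AB rel_interior_subset by blast

lemma ou_carrier: "x \<in> open_union A \<Longrightarrow> \<exists>i<N. x \<in> rel_interior (e i)"
proof -
  assume "x \<in> open_union A"
  then obtain S where S: "S \<in> A" "x \<in> rel_interior S" by (auto simp: open_union_def)
  then have "S \<noteq> {}" by auto
  then have "S \<in> e ` {..<N}" using S e by (auto simp: bij_betw_def)
  then show ?thesis using S by auto
qed

lemma rel_e_ou: "i < N \<Longrightarrow> rel_interior (e i) \<subseteq> open_union A"
  using eA by (auto simp: open_union_def)

lemma D_pos: "x \<in> open_union A \<Longrightarrow> 0 < D x"
proof -
  assume "x \<in> open_union A"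
  then obtain i where i: "i < N" "x \<in> rel_interior (e i)" using ou_carrier by blast
  have "W i x \<le> D x" unfolding D_def using i(1) W_nonneg by (intro member_le_sum) auto
  then show ?thesis using W_self[OF i] by linarith
qed

lemma r_K: "x \<in> open_union A \<Longrightarrow> r x \<in> Kset N ok"
proof -
  assume x: "x \<in> open_union A"
  have Dp: "0 < D x" using D_pos[OF x] .
  have "(\<Sum>i<N. r x i) = 1" using Dp by (simp add: r_def D_def sum_divide_distrib[symmetric])
  moreover have "\<forall>i. 0 \<le> r x i" using Dp W_nonneg by (simp add: r_def)
  moreover have "\<forall>i. N \<le> i \<longrightarrow> r x i = 0" by (simp add: r_def)
  moreover have "ok {i. r x i \<noteq> 0}"
  proof -
    have "{i. r x i \<noteq> 0} = {i. i < N \<and> 0 < W i x}" using Dp W_nonneg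
      by (auto simp: r_def less_le)
    then show ?thesis unfolding ok_def using W_chain by blast
  qed
  ultimately show ?thesis by (simp add: Kset_def)
qed

lemma gr_rel: "i0 < N \<Longrightarrow> x \<in> rel_interior (e i0) \<Longrightarrow> g (r x) \<in> rel_interior (e i0)"
proof -
  assume i0: "i0 < N" and x: "x \<in> rel_interior (e i0)"
  have xo: "x \<in> open_union A" using rel_e_ou[OF i0] x by blast
  have rK: "r x \<in> Kset N ok" using r_K[OF xo] .
  have z: "\<And>a. a \<notin> Vt i0 \<Longrightarrow> lam B x a = 0" using carrier(2)[OF eB[OF i0] x] by (simp add: Vt_def)
  show ?thesis
  proof (rule key_conv(2))
    show "\<And>i. 0 \<le> r x i" "(\<Sum>i<N. r x i) = 1" using rK by (auto simp: Kset_def)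
    show "i0 < N" by fact
    show "0 < r x i0" using W_self[OF i0 x] D_pos[OF xo] i0 by (simp add: r_def)
    show "Vt i \<subseteq> Vt i0" if "i < N" "r x i \<noteq> 0" for i
    proof -
      have "W i x \<noteq> 0" using that by (simp add: r_def)
      then have "0 < W i x" using W_nonneg[of i x] by linarith
      then show ?thesis using W_sub[OF _ that(1) z] by blast
    qed
  qed
qed

lemma r_cont: "continuous_on (open_union A) r"
proof (rule continuous_on_coordinatewise_then_product)
  fix i
  show "continuous_on (open_union A) (\<lambda>x. r x i)"
  proof (cases "i < N")
    case True
    have "continuous_on (open_union A) (W i)" using W_cont[OF True] ou_sub continuous_on_subset by blast
    moreover have "continuous_on (open_union A) D" unfolding D_def
      using W_cont ou_sub continuous_on_subset by (intro continuous_intros) blast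
    moreover have "\<forall>x\<in>open_union A. D x \<noteq> 0" using D_pos by (metis less_irrefl)
    ultimately have "continuous_on (open_union A) (\<lambda>x. W i x / D x)" by (rule continuous_on_divide)
    then show ?thesis using True by (simp add: r_def)
  next
    case False then show ?thesis by (simp add: r_def)
  qed
qed

lemma g_cont: "continuous_on S g"
  unfolding g_def by (intro continuous_on_sum continuous_on_scaleR cont_coord continuous_on_const)


lemma top_elem:
  assumes "ok I" "I \<noteq> {}"
  shows "\<exists>i0\<in>I. \<forall>i\<in>I. Vt i \<subseteq> Vt i0"
proof -
  have fI: "finite I" using ok_N[OF assms(1)] finite_subset by blast
  define M where "M = Max ((\<lambda>i. card (Vt i)) ` I)"
  have "M \<in> (\<lambda>i. card (Vt i)) ` I" unfolding M_def using fI assms(2) by (intro Max_in) auto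
  then obtain i0 where i00: "i0 \<in> I" "card (Vt i0) = M" by blast
  have "\<And>i. i \<in> I \<Longrightarrow> card (Vt i) \<le> M" unfolding M_def using fI by (intro Max_ge) auto
  then have i0: "i0 \<in> I" "\<And>i. i \<in> I \<Longrightarrow> card (Vt i) \<le> card (Vt i0)" using i00 by auto
  have "Vt i \<subseteq> Vt i0" if i: "i \<in> I" for i
  proof -
    have N: "i < N" "i0 < N" using ok_N[OF assms(1)] i i0(1) by auto
    have "Vt i \<subseteq> Vt i0 \<or> Vt i0 \<subseteq> Vt i" using assms(1) i i0(1) by (simp add: ok_def)
    moreover have "Vt i0 \<subseteq> Vt i \<Longrightarrow> Vt i0 = Vt i"
      using card_subset_eq[OF Vt_props(1)[OF N(1)]] i0(2)[OF i] card_mono[OF Vt_props(1)[OF N(1)]]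
      by (metis le_antisym)
    ultimately show ?thesis by blast
  qed
  then show ?thesis using i0(1) by blast
qed

lemma g_K:
  assumes y: "y \<in> Kset N ok"
  shows "\<exists>i0<N. g y \<in> rel_interior (e i0) \<and> lam B (g y) = ucoef y"
proof -
  have okI: "ok {i. y i \<noteq> 0}" and ne: "{i. y i \<noteq> 0} \<noteq> {}"
    using K_supp[OF ok_N ok_down ok_card y] by auto
  obtain i0 where i0: "i0 \<in> {i. y i \<noteq> 0}" "\<And>i. i \<in> {i. y i \<noteq> 0} \<Longrightarrow> Vt i \<subseteq> Vt i0"
    using top_elem[OF okI ne] by blast
  have y0: "\<And>i. 0 \<le> y i" and ys: "(\<Sum>i<N. y i) = 1" using y by (auto simp: Kset_def)
  have i0N: "i0 < N" using ok_N[OF okI] i0(1) by auto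
  have yp: "0 < y i0" using i0(1) y0[of i0] by simp
  have sub: "\<And>i. i < N \<Longrightarrow> y i \<noteq> 0 \<Longrightarrow> Vt i \<subseteq> Vt i0" using i0(2) by blast
  show ?thesis using key_conv(2,3)[OF y0 ys i0N yp sub] i0N by blast
qed

lemma g_ou: "y \<in> Kset N ok \<Longrightarrow> g y \<in> open_union A"
  using g_K rel_e_ou by blast

lemma W5:
  assumes y: "y \<in> Kset N ok" and i: "i < N" "0 < W i (g y)" and j: "y j \<noteq> 0"
  shows "Vt i \<subseteq> Vt j \<or> Vt j \<subseteq> Vt i"
proof (rule ccontr)
  assume "\<not> (Vt i \<subseteq> Vt j \<or> Vt j \<subseteq> Vt i)"
  then obtain a b where ab: "a \<in> Vt i" "a \<notin> Vt j" "b \<in> Vt j" "b \<notin> Vt i" by blast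
  have okI: "ok {i. y i \<noteq> 0}" using y by (simp add: Kset_def)
  have jN: "j < N" using ok_N[OF okI] j by auto
  have y0: "\<And>i. 0 \<le> y i" using y by (auto simp: Kset_def)
  have lt: "lam B (g y) b < lam B (g y) a" using W_sep[OF i(2,1) ab(1) _ ab(4)] ab(3) Vt_V[OF jN] by blast
  obtain i0 where "i0 < N" "lam B (g y) = ucoef y" using g_K[OF y] by blast
  then have lt2: "ucoef y b < ucoef y a" using lt by simp
  have "ucoef y a \<le> ucoef y b"
    unfolding ucoef_def
  proof (rule sum_mono)
    fix l assume l: "l \<in> {..<N}"
    show "y l * (if a \<in> Vt l then 1 / real (card (Vt l)) else 0) \<le> y l * (if b \<in> Vt l then 1 / real (card (Vt l)) else 0)"
    proof (cases "y l = 0")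
      case False
      then have "Vt l \<subseteq> Vt j \<or> Vt j \<subseteq> Vt l" using okI j by (simp add: ok_def)
      then have "a \<in> Vt l \<Longrightarrow> b \<in> Vt l" using ab by blast
      then show ?thesis using y0[of l] by (cases "a \<in> Vt l") auto
    qed simp
  qed
  then show False using lt2 by simp
qed

definition H :: "real \<times> (nat \<Rightarrow> real) \<Rightarrow> (nat \<Rightarrow> real)" where
  "H = (\<lambda>(t, y). (\<lambda>i. (1 - t) * r (g y) i + t * y i))"

lemma H_K:
  assumes t: "t \<in> {0..1}" and y: "y \<in> Kset N ok"
  shows "H (t, y) \<in> Kset N ok"
proof -
  have go: "g y \<in> open_union A" using g_ou[OF y] .
  have rK: "r (g y) \<in> Kset N ok" using r_K[OF go] .
  let ?z = "H (t, y)"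
  have z: "?z i = (1 - t) * r (g y) i + t * y i" for i by (simp add: H_def)
  have "\<forall>i. 0 \<le> ?z i" using t y rK by (auto simp: z Kset_def)
  moreover have "\<forall>i. N \<le> i \<longrightarrow> ?z i = 0" using y rK by (auto simp: z Kset_def)
  moreover have "(\<Sum>i<N. ?z i) = 1"
    using y rK by (simp add: z Kset_def sum.distrib sum_distrib_left[symmetric])
  moreover have "ok {i. ?z i \<noteq> 0}"
  proof (rule ok_down)
    show "{i. ?z i \<noteq> 0} \<subseteq> {i. r (g y) i \<noteq> 0} \<union> {i. y i \<noteq> 0}" by (auto simp: z)
    have okI: "ok {i. y i \<noteq> 0}" and okR: "ok {i. r (g y) i \<noteq> 0}" using y rK by (auto simp: Kset_def)
    have cross: "Vt i \<subseteq> Vt j \<or> Vt j \<subseteq> Vt i" if "r (g y) i \<noteq> 0" "y j \<noteq> 0" for i j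
    proof -
      have iN: "i < N" using that(1) by (simp add: r_def split: if_splits)
      have "W i (g y) \<noteq> 0" using that(1) iN by (simp add: r_def)
      then have "0 < W i (g y)" using W_nonneg[of i "g y"] by linarith
      then show ?thesis using W5[OF y iN _ that(2)] by blast
    qed
    show "ok ({i. r (g y) i \<noteq> 0} \<union> {i. y i \<noteq> 0})"
      unfolding ok_def
    proof (intro conjI ballI)
      show "{i. r (g y) i \<noteq> 0} \<union> {i. y i \<noteq> 0} \<subseteq> {..<N}" using ok_N[OF okI] ok_N[OF okR] by blast
      fix i j assume "i \<in> {i. r (g y) i \<noteq> 0} \<union> {i. y i \<noteq> 0}" "j \<in> {i. r (g y) i \<noteq> 0} \<union> {i. y i \<noteq> 0}"
      then show "Vt i \<subseteq> Vt j \<or> Vt j \<subseteq> Vt i"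
        using okI okR cross[of i j] cross[of j i] unfolding ok_def by blast
    qed
  qed
  ultimately show ?thesis by (simp add: Kset_def)
qed

lemma H_cont: "continuous_on ({0..1} \<times> Kset N ok) H"
proof -
  have rg: "continuous_on (Kset N ok) (r \<circ> g)"
    using continuous_on_compose[OF g_cont continuous_on_subset[OF r_cont]] g_ou by blast
  show ?thesis
  proof (rule continuous_on_coordinatewise_then_product)
    fix i
    have c0: "continuous_on (Kset N ok) (\<lambda>y. (r \<circ> g) y i)"
      by (rule continuous_on_product_then_coordinatewise[OF rg])
    have c1: "continuous_on ({0..1} \<times> Kset N ok) (\<lambda>p. (r \<circ> g) (snd p) i)"
      by (rule continuous_on_compose2[OF c0 continuous_on_snd]) auto
    have c2: "continuous_on ({0..1} \<times> Kset N ok) (\<lambda>p. snd p i)"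
      by (intro continuous_on_compose2[OF cont_coord[of UNIV i] continuous_on_snd]) auto
    have "continuous_on ({0..1} \<times> Kset N ok) (\<lambda>p. (1 - fst p) * (r \<circ> g) (snd p) i + fst p * snd p i)"
      using c1 c2 by (intro continuous_intros)
    then show "continuous_on ({0..1} \<times> Kset N ok) (\<lambda>p. H p i)"
      by (simp add: H_def case_prod_beta)
  qed
qed

theorem hequiv: "top_of_set (open_union A) homotopy_equivalent_space top_of_set (Kset N ok)"
  unfolding homotopy_equivalent_space_def
proof (intro exI conjI)
  show "continuous_map (top_of_set (open_union A)) (top_of_set (Kset N ok)) r"
    using r_cont r_K by auto
  show "continuous_map (top_of_set (Kset N ok)) (top_of_set (open_union A)) g"
    using g_cont g_ou by auto
  show "homotopic_with (\<lambda>x. True) (top_of_set (open_union A)) (top_of_set (open_union A)) (g \<circ> r) id"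
  proof (rule homotopic_with_linear)
    show "continuous_on (open_union A) (g \<circ> r)"
      by (rule continuous_on_compose[OF r_cont g_cont])
    show "continuous_on (open_union A) id" by (simp add: id_def)
    fix x assume x: "x \<in> open_union A"
    obtain i0 where i0: "i0 < N" "x \<in> rel_interior (e i0)" using ou_carrier[OF x] by blast
    have "closed_segment ((g \<circ> r) x) (id x) \<subseteq> rel_interior (e i0)"
      using gr_rel[OF i0] i0(2) convex_rel_interior[of "e i0"] Vt_props(3)[OF i0(1)]
      by (intro closed_segment_subset) (auto simp: convex_convex_hull)
    then show "closed_segment ((g \<circ> r) x) (id x) \<subseteq> open_union A" using rel_e_ou[OF i0(1)] by blast
  qed
  show "homotopic_with (\<lambda>x. True) (top_of_set (Kset N ok)) (top_of_set (Kset N ok)) (r \<circ> g) id"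
    unfolding homotopic_with_def
  proof (intro exI conjI allI ballI)
    show "continuous_map (prod_topology (top_of_set {0..1}) (top_of_set (Kset N ok))) (top_of_set (Kset N ok)) H"
      using H_cont H_K by (auto simp: prod_topology_subtopology_eu)
    show "H (0, x) = (r \<circ> g) x" for x by (simp add: H_def)
    show "H (1, x) = id x" for x by (simp add: H_def)
  qed auto
qed

end

theorem lemma5p3:
  fixes B A :: "'a::euclidean_space set set" and m :: nat
  assumes "simplicial_complex B"
    and "A \<subseteq> B" and "A \<noteq> {}"
    and "\<forall>S\<in>A. \<exists>n. n \<le> int m \<and> n simplex S"
  shows "\<exists>Y :: (nat \<Rightarrow> real) topology.
           finite_CW_complex_dim Y m \<and>
           (subtopology euclidean (open_union A)) homotopy_equivalent_space Y"
proof -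
  have "finite B" using assms(1) by (simp add: simplicial_complex_def)
  then have fin: "finite (A - {{}})" using assms(2) finite_subset by blast
  obtain e where e0: "bij_betw e {0..<card (A - {{}})} (A - {{}})"
    using ex_bij_betw_nat_finite[OF fin] by blast
  then have e: "bij_betw e {..<card (A - {{}})} (A - {{}})" by (simp add: atLeast0LessThan)
  interpret L: LA B A m "card (A - {{}})" e
    using assms(1,2,4) e by unfold_locales auto
  have cw: "finite_CW_complex_dim (subtopology (powertop_real UNIV) (Kset (card (A - {{}})) L.ok)) m"
    by (rule K_CW[OF L.ok_N L.ok_down L.ok_card])
  have he: "top_of_set (open_union A) homotopy_equivalent_space top_of_set (Kset (card (A - {{}})) L.ok)"
    by (rule L.hequiv)
  show ?thesis
    using cw he by (intro exI[of _ "subtopology (powertop_real UNIV) (Kset (card (A - {{}})) L.ok)"])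
      (simp add: euclidean_product_topology)
qed

end
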